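(* Let $\mathbb K$ be a commutative semiring with $0\ne1$ and let $S:\mathrm{NW}(\Delta)\to K$ be a regular nested word series. Then $\pi(S):\Delta^*\to K$ is an algebraic formal power series.
   Context: Nested words: $\Delta$ finite alphabet. A nesting relation of width $n$ is a relation $\nu$ on $[n]$ with: $\nu(i,j)\Rightarrow i<j$; $\nu(i,j),\nu(i,j')\Rightarrow j=j'$ and $\nu(i,j),\nu(i',j)\Rightarrow i=i'$; $\nu(i,j),\nu(i',j'),i<i'\Rightarrow j<i'$ or $j'<j$. A nested word is $(w,\nu)$, $w=a_1\cdots a_n\in\Delta^+$, $\nu$ of width $n$; $\mathrm{NW}(\Delta)$ is their set. If $\nu(i,j)$, $i$ is a call and $j$ a return position; others are internal. WNWA over $\mathbb K$: $\mathcal A=(Q,\iota,\delta_{call},\delta_{int},\delta_{ret},\kappa)$, $Q$ finite, $\delta_{call},\delta_{int}:Q\times\Delta\times Q\to K$, $\delta_{ret}:Q\times Q\times\Delta\times Q\to K$, $\iota,\kappa:Q\to K$. A run on $(a_1\cdots a_n,\nu)$ is $(q_0,\dots,q_n)$; weight at $j$: $\delta_{call}(q_{j-1},a_j,q_j)$ for a call $j$, $\delta_{int}(q_{j-1},a_j,q_j)$ for internal $j$, $\delta_{ret}(q_{j-1},q_{i-1},a_j,q_j)$ if $\nu(i,j)$; run weight is the product. $\|\mathcal A\|(nw)=\sum_{(q_0..q_n)}\iota(q_0)\mathrm{wt}\,\kappa(q_n)$. A series is regular if it equals some $\|\mathcal A\|$. Projection: $\pi(w,\nu)=w$ and $\pi(S)(w)=\sum_{nw\in\mathrm{NW}(\Delta),\,\pi(nw)=w}S(nw)$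 for $w\in\Delta^*$ (so $\pi(S)(\varepsilon)=0$). Algebraic series: a formal power series is a map $\Delta^*\to K$; $\varepsilon$ is the empty word; sums and scalar multiples are pointwise and the Cauchy product is $(S_1S_2)(w)=\sum_{w=w_1w_2}S_1(w_1)S_2(w_2)$; a word $u$ is identified with its characteristic series. Let $\mathcal X$ be a finite set of variables disjoint from $\Delta$. A polynomial is a map $P:(\Delta\cup\mathcal X)^*\to K$ with finite support. An algebraic system is a family $(P_X)_{X\in\mathcal X}$ of polynomials; a solution is a family $(S_X)_{X\in\mathcal X}$ of series $\Delta^*\to K$ with $S_X=\sum (P_X,u_1X_1\cdots u_kX_ku_{k+1})\,u_1S_{X_1}\cdots u_kS_{X_k}u_{k+1}$, summing over all $u_1X_1\cdots u_kX_ku_{k+1}$ in the support of $P_X$ ($u_j\in\Delta^*$, $X_j\in\mathcal X$). The system is proper if $P_X(Y)=P_X(\varepsilon)=0$ for all $X,Y\in\mathcal X$; a series $S$ is quasiregular if $S(\varepsilon)=0$. A proper system has exactly one quasiregular solution. A series is algebraic if it is a component $S_X$ of the quasiregular solution of a proper algebraic system. *)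

theory Defs
  imports Main
begin

text \<open>Positions are 1-based: a word w has positions 1..length w, and letter
 a_j is w ! (j - 1).\<close>

definition nesting_rel :: "nat \<Rightarrow> (nat \<times> nat) set \<Rightarrow> bool" where
  "nesting_rel n \<nu> \<longleftrightarrow>
     \<nu> \<subseteq> {1..n} \<times> {1..n} \<and>
     (\<forall>i j. (i, j) \<in> \<nu> \<longrightarrow> i < j) \<and>
     (\<forall>i j j'. (i, j) \<in> \<nu> \<longrightarrow> (i, j') \<in> \<nu> \<longrightarrow> j = j') \<and>
     (\<forall>i i' j. (i, j) \<in> \<nu> \<longrightarrow> (i', j) \<in> \<nu> \<longrightarrow> i = i') \<and>
     (\<forall>i j i' j'. (i, j) \<in> \<nu> \<longrightarrow> (i', j') \<in> \<nu> \<longrightarrow> i < i' \<longrightarrow> j < i' \<or> j' < j)"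

type_synonym 'a nested_word = "'a list \<times> (nat \<times> nat) set"

definition NW :: "'a nested_word set" where
  "NW = {(w, \<nu>). w \<noteq> [] \<and> nesting_rel (length w) \<nu>}"

text \<open>States are natural numbers drawn from a finite set Q (any finite state set
 can be renamed into such a set).\<close>

record ('a, 'k) wnwa =
  states :: "nat set"
  init :: "nat \<Rightarrow> 'k"
  dcall :: "nat \<Rightarrow> 'a \<Rightarrow> nat \<Rightarrow> 'k"
  dint :: "nat \<Rightarrow> 'a \<Rightarrow> nat \<Rightarrow> 'k"
  dret :: "nat \<Rightarrow> nat \<Rightarrow> 'a \<Rightarrow> nat \<Rightarrow> 'k"
  final :: "nat \<Rightarrow> 'k"

definition wnwa_ok :: "('a, 'k) wnwa \<Rightarrow> bool" where
  "wnwa_ok A \<longleftrightarrow> finite (states A)"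

definition step_weight ::
  "('a, 'k) wnwa \<Rightarrow> 'a nested_word \<Rightarrow> nat list \<Rightarrow> nat \<Rightarrow> 'k" where
  "step_weight A nw qs j =
     (let w = fst nw; \<nu> = snd nw in
      if \<exists>i. (i, j) \<in> \<nu> then
        dret A (qs ! (j - 1)) (qs ! ((THE i. (i, j) \<in> \<nu>) - 1)) (w ! (j - 1)) (qs ! j)
      else if \<exists>j'. (j, j') \<in> \<nu> then dcall A (qs ! (j - 1)) (w ! (j - 1)) (qs ! j)
      else dint A (qs ! (j - 1)) (w ! (j - 1)) (qs ! j))"

definition runs :: "('a, 'k) wnwa \<Rightarrow> nat \<Rightarrow> nat list set" where
  "runs A n = {qs. length qs = Suc n \<and> set qs \<subseteq> states A}"

definition behaviour :: "('a, 'k::comm_semiring_1) wnwa \<Rightarrow> 'a nested_word \<Rightarrow> 'k" where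
  "behaviour A nw =
     (\<Sum>qs\<in>runs A (length (fst nw)).
        init A (qs ! 0) * (\<Prod>j\<in>{1..length (fst nw)}. step_weight A nw qs j)
          * final A (qs ! length (fst nw)))"

definition regular_nw :: "('a nested_word \<Rightarrow> 'k::comm_semiring_1) \<Rightarrow> bool" where
  "regular_nw S \<longleftrightarrow> (\<exists>A. wnwa_ok A \<and> (\<forall>nw\<in>NW. S nw = behaviour A nw))"

definition proj :: "('a nested_word \<Rightarrow> 'k::comm_semiring_1) \<Rightarrow> 'a list \<Rightarrow> 'k" where
  "proj S w = (if w = [] then 0
               else (\<Sum>\<nu>\<in>{\<nu>. nesting_rel (length w) \<nu>}. S (w, \<nu>)))"

definition cauchy_prod :: "('a list \<Rightarrow> 'k::comm_semiring_1) \<Rightarrow> ('a list \<Rightarrow> 'k) \<Rightarrow> 'a list \<Rightarrow> 'k" where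
  "cauchy_prod S1 S2 w = (\<Sum>p\<in>{(u, v). u @ v = w}. S1 (fst p) * S2 (snd p))"

definition char_series :: "'a list \<Rightarrow> 'a list \<Rightarrow> 'k::comm_semiring_1" where
  "char_series u w = (if w = u then 1 else 0)"

text \<open>Letters of polynomials: Inl a for a terminal a, Inr X for a variable X.\<close>
fun eval_mon :: "(nat \<Rightarrow> 'a list \<Rightarrow> 'k::comm_semiring_1) \<Rightarrow> ('a + nat) list \<Rightarrow> 'a list \<Rightarrow> 'k" where
  "eval_mon S [] = char_series []"
| "eval_mon S (Inl a # m) = cauchy_prod (char_series [a]) (eval_mon S m)"
| "eval_mon S (Inr X # m) = cauchy_prod (S X) (eval_mon S m)"

definition supp :: "(('a + nat) list \<Rightarrow> 'k::zero) \<Rightarrow> ('a + nat) list set" where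
  "supp P = {m. P m \<noteq> 0}"

definition polynomial_over :: "nat set \<Rightarrow> (('a + nat) list \<Rightarrow> 'k::zero) \<Rightarrow> bool" where
  "polynomial_over V P \<longleftrightarrow> finite (supp P) \<and>
     (\<forall>m\<in>supp P. \<forall>X. Inr X \<in> set m \<longrightarrow> X \<in> V)"

definition proper_system :: "nat set \<Rightarrow> (nat \<Rightarrow> ('a + nat) list \<Rightarrow> 'k::zero) \<Rightarrow> bool" where
  "proper_system V P \<longleftrightarrow> (\<forall>X\<in>V. P X [] = 0 \<and> (\<forall>Y\<in>V. P X [Inr Y] = 0))"

definition is_solution ::
  "nat set \<Rightarrow> (nat \<Rightarrow> ('a + nat) list \<Rightarrow> 'k::comm_semiring_1) \<Rightarrow> (nat \<Rightarrow> 'a list \<Rightarrow> 'k) \<Rightarrow> bool" where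
  "is_solution V P S \<longleftrightarrow>
     (\<forall>X\<in>V. \<forall>w. S X w = (\<Sum>m\<in>supp (P X). P X m * eval_mon S m w))"

definition quasiregular :: "('a list \<Rightarrow> 'k::zero) \<Rightarrow> bool" where
  "quasiregular T \<longleftrightarrow> T [] = 0"

definition algebraic :: "('a list \<Rightarrow> 'k::comm_semiring_1) \<Rightarrow> bool" where
  "algebraic T \<longleftrightarrow>
     (\<exists>V P X0 S. finite V \<and> X0 \<in> V \<and> (\<forall>X\<in>V. polynomial_over V (P X)) \<and>
        proper_system V P \<and> is_solution V P S \<and> (\<forall>X\<in>V. quasiregular (S X)) \<and>
        S X0 = T)"

end

theory Submission
  imports Defs "HOL-Library.Nat_Bijection"
begin

lemma cp_take_drop:
  "cauchy_prod S1 S2 w = (\<Sum>k\<le>length w. S1 (take k w) * S2 (drop k w))"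
  unfolding cauchy_prod_def
  by (rule sum.reindex_bij_witness[where j="\<lambda>p. length (fst p)" and i="\<lambda>k. (take k w, drop k w)"])
     auto

lemma cp_char_cons:
  "cauchy_prod (char_series [a]) T w =
     (case w of [] \<Rightarrow> 0 | x # w' \<Rightarrow> if x = a then T w' else 0)"
proof (cases w)
  case Nil
  then show ?thesis by (simp add: cp_take_drop char_series_def)
next
  case (Cons x w')
  have "cauchy_prod (char_series [a]) T w =
     (\<Sum>k\<le>length w. if k = 1 then (if x = a then T w' else 0) else 0)"
    unfolding cp_take_drop
  proof (rule sum.cong)
    fix k assume "k \<in> {..length w}"
    show "char_series [a] (take k w) * T (drop k w) = (if k = 1 then (if x = a then T w' else 0) else 0)"
      using Cons \<open>k \<in> {..length w}\<close> by (cases k) (auto simp: char_series_def)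
  qed simp
  also have "\<dots> = (if x = a then T w' else 0)"
    using Cons by (auto simp: Suc_le_eq)
  finally show ?thesis using Cons by simp
qed

lemma cp_eps_left: "cauchy_prod (char_series []) T = T"
proof
  fix w
  have "cauchy_prod (char_series []) T w = (\<Sum>k\<le>length w. if k = 0 then T w else 0)"
    unfolding cp_take_drop
    by (rule sum.cong) (auto simp: char_series_def)
  then show "cauchy_prod (char_series []) T w = T w" by simp
qed

lemma cp_eps_right: "cauchy_prod T (char_series []) = T"
proof
  fix w
  have "cauchy_prod T (char_series []) w = (\<Sum>k\<le>length w. if k = length w then T w else 0)"
    unfolding cp_take_drop
    by (rule sum.cong) (auto simp: char_series_def)
  then show "cauchy_prod T (char_series []) w = T w" by simp
qed

lemma cp_G4:
  "cauchy_prod (char_series [a]) (cauchy_prod F (cauchy_prod (char_series [b]) G)) (x # w) =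
    (if x = a then (\<Sum>k<length w. if w ! k = b then F (take k w) * G (drop (Suc k) w) else 0) else 0)"
proof -
  have "cauchy_prod F (cauchy_prod (char_series [b]) G) w =
     (\<Sum>k\<le>length w. if k < length w then (if w ! k = b then F (take k w) * G (drop (Suc k) w) else 0) else 0)"
    unfolding cp_take_drop[of F]
  proof (rule sum.cong)
    fix k assume "k \<in> {..length w}"
    show "F (take k w) * cauchy_prod (char_series [b]) G (drop k w) =
      (if k < length w then (if w ! k = b then F (take k w) * G (drop (Suc k) w) else 0) else 0)"
      by (cases "k < length w") (auto simp: cp_char_cons Cons_nth_drop_Suc[symmetric])
  qed simp
  also have "\<dots> = (\<Sum>k<length w. if w ! k = b then F (take k w) * G (drop (Suc k) w) else 0)"
    by (simp add: lessThan_Suc_atMost[symmetric])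
  finally show ?thesis by (simp add: cp_char_cons)
qed

section \<open>Nesting relations\<close>

definition NR :: "nat \<Rightarrow> (nat \<times> nat) set set" where
  "NR n = {\<nu>. nesting_rel n \<nu>}"

definition shiftr :: "nat \<Rightarrow> (nat \<times> nat) set \<Rightarrow> (nat \<times> nat) set" where
  "shiftr c \<nu> = (\<lambda>(i, j). (i + c, j + c)) ` \<nu>"

definition restr :: "nat \<Rightarrow> nat \<Rightarrow> nat \<Rightarrow> (nat \<times> nat) set \<Rightarrow> (nat \<times> nat) set" where
  "restr c lo hi \<nu> = (\<lambda>(i, j). (i - c, j - c)) ` {(i, j) \<in> \<nu>. lo \<le> i \<and> j \<le> hi}"

definition comb :: "nat \<Rightarrow> (nat \<times> nat) set \<Rightarrow> (nat \<times> nat) set \<Rightarrow> (nat \<times> nat) set" where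
  "comb k \<nu>1 \<nu>2 = insert (1, k + 2) (shiftr 1 \<nu>1 \<union> shiftr (k + 2) \<nu>2)"

lemma mem_shiftr: "(x, y) \<in> shiftr c \<nu> \<longleftrightarrow> c \<le> x \<and> c \<le> y \<and> (x - c, y - c) \<in> \<nu>"
proof
  assume "(x, y) \<in> shiftr c \<nu>"
  then show "c \<le> x \<and> c \<le> y \<and> (x - c, y - c) \<in> \<nu>"
    unfolding shiftr_def by auto
next
  assume h: "c \<le> x \<and> c \<le> y \<and> (x - c, y - c) \<in> \<nu>"
  then have "(x, y) = (\<lambda>(i, j). (i + c, j + c)) (x - c, y - c)" by simp
  then show "(x, y) \<in> shiftr c \<nu>" unfolding shiftr_def using h by blast
qed

lemma mem_restr:
  assumes "c \<le> lo" "\<And>i j. (i, j) \<in> \<nu> \<Longrightarrow> i < j"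
  shows "(x, y) \<in> restr c lo hi \<nu> \<longleftrightarrow> (x + c, y + c) \<in> \<nu> \<and> lo \<le> x + c \<and> y + c \<le> hi"
proof
  assume "(x, y) \<in> restr c lo hi \<nu>"
  then obtain i j where ij: "(i, j) \<in> \<nu>" "lo \<le> i" "j \<le> hi" "x = i - c" "y = j - c"
    unfolding restr_def by auto
  with assms have "i < j" by blast
  with ij assms(1) have "x + c = i" "y + c = j" by auto
  with ij show "(x + c, y + c) \<in> \<nu> \<and> lo \<le> x + c \<and> y + c \<le> hi" by simp
next
  assume h: "(x + c, y + c) \<in> \<nu> \<and> lo \<le> x + c \<and> y + c \<le> hi"
  then have "(x, y) = (\<lambda>(i, j). (i - c, j - c)) (x + c, y + c)" by simp
  then show "(x, y) \<in> restr c lo hi \<nu>" unfolding restr_def using h by blast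
qed

lemma nr_lt: "nesting_rel n \<nu> \<Longrightarrow> (i, j) \<in> \<nu> \<Longrightarrow> i < j"
  unfolding nesting_rel_def by blast

lemma nr_bounds: "nesting_rel n \<nu> \<Longrightarrow> (i, j) \<in> \<nu> \<Longrightarrow> 1 \<le> i \<and> j \<le> n"
  unfolding nesting_rel_def by auto

lemma nr_fun: "nesting_rel n \<nu> \<Longrightarrow> (i, j) \<in> \<nu> \<Longrightarrow> (i, j') \<in> \<nu> \<Longrightarrow> j = j'"
  unfolding nesting_rel_def by blast

lemma nr_inj: "nesting_rel n \<nu> \<Longrightarrow> (i, j) \<in> \<nu> \<Longrightarrow> (i', j) \<in> \<nu> \<Longrightarrow> i = i'"
  unfolding nesting_rel_def by blast

lemma nr_cross: "nesting_rel n \<nu> \<Longrightarrow> (i, j) \<in> \<nu> \<Longrightarrow> (i', j') \<in> \<nu> \<Longrightarrow> i < i' \<Longrightarrow> j < i' \<or> j' < j"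
  unfolding nesting_rel_def by blast

lemma nr_intro:
  assumes "\<And>i j. (i, j) \<in> \<nu> \<Longrightarrow> 1 \<le> i \<and> i < j \<and> j \<le> n"
    "\<And>i j j'. (i, j) \<in> \<nu> \<Longrightarrow> (i, j') \<in> \<nu> \<Longrightarrow> j = j'"
    "\<And>i i' j. (i, j) \<in> \<nu> \<Longrightarrow> (i', j) \<in> \<nu> \<Longrightarrow> i = i'"
    "\<And>i j i' j'. (i, j) \<in> \<nu> \<Longrightarrow> (i', j') \<in> \<nu> \<Longrightarrow> i < i' \<Longrightarrow> j < i' \<or> j' < j"
  shows "nesting_rel n \<nu>"
  unfolding nesting_rel_def
proof (intro conjI allI impI)
  show "\<nu> \<subseteq> {1..n} \<times> {1..n}"
  proof
    fix x assume "x \<in> \<nu>"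
    then obtain i j where "x = (i, j)" "(i, j) \<in> \<nu>" by (cases x) auto
    with assms(1)[of i j] show "x \<in> {1..n} \<times> {1..n}" by auto
  qed
qed (use assms in blast)+

lemma nr_not_call_ret: "nesting_rel n \<nu> \<Longrightarrow> (i, j) \<in> \<nu> \<Longrightarrow> (j, k) \<in> \<nu> \<Longrightarrow> False"
  using nr_cross[of n \<nu> i j j k] nr_lt[of n \<nu> i j] nr_lt[of n \<nu> j k] by auto

lemma finite_NR: "finite (NR n)"
proof -
  have "NR n \<subseteq> Pow ({1..n} \<times> {1..n})"
    unfolding NR_def nesting_rel_def by auto
  then show ?thesis by (rule finite_subset) simp
qed

lemma NR_A: "nesting_rel n \<nu> \<Longrightarrow> nesting_rel (Suc n) (shiftr 1 \<nu>)"
  apply (rule nr_intro)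
  subgoal for i j using nr_lt[of n \<nu> "i-1" "j-1"] nr_bounds[of n \<nu> "i-1" "j-1"] by (auto simp: mem_shiftr)
  subgoal for i j j' using nr_fun[of n \<nu> "i-1" "j-1" "j'-1"] by (auto simp: mem_shiftr)
  subgoal for i i' j using nr_inj[of n \<nu> "i-1" "j-1" "i'-1"] by (auto simp: mem_shiftr)
  subgoal for i j i' j' using nr_cross[of n \<nu> "i-1" "j-1" "i'-1" "j'-1"] by (auto simp: mem_shiftr; presburger)
  done
lemma pair_set_eqI: "(\<And>x y. (x, y) \<in> A \<longleftrightarrow> (x, y) \<in> B) \<Longrightarrow> A = B"
  by auto

lemma NR_A_inv:
  assumes nr: "nesting_rel (Suc n) \<nu>" and no: "\<And>j. (1, j) \<notin> \<nu>"
  shows "nesting_rel n (restr 1 2 (Suc n) \<nu>)" "shiftr 1 (restr 1 2 (Suc n) \<nu>) = \<nu>"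
proof -
  have lt: "\<And>i j. (i, j) \<in> \<nu> \<Longrightarrow> i < j" using nr nr_lt by blast
  note mr = mem_restr[of 1 2 \<nu>, OF _ lt, simplified]
  show "nesting_rel n (restr 1 2 (Suc n) \<nu>)"
    apply (rule nr_intro)
    subgoal for i j using nr_lt[OF nr, of "i+1" "j+1"] nr_bounds[OF nr, of "i+1" "j+1"] by (auto simp: mr)
    subgoal for i j j' using nr_fun[OF nr, of "i+1" "j+1" "j'+1"] by (auto simp: mr)
    subgoal for i i' j using nr_inj[OF nr, of "i+1" "j+1" "i'+1"] by (auto simp: mr)
    subgoal for i j i' j' using nr_cross[OF nr, of "i+1" "j+1" "i'+1" "j'+1"] by (auto simp: mr)
    done
  show "shiftr 1 (restr 1 2 (Suc n) \<nu>) = \<nu>"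
  proof (rule pair_set_eqI)
    fix x y
    show "(x, y) \<in> shiftr 1 (restr 1 2 (Suc n) \<nu>) \<longleftrightarrow> (x, y) \<in> \<nu>"
    proof
      assume "(x, y) \<in> shiftr 1 (restr 1 2 (Suc n) \<nu>)"
      then show "(x, y) \<in> \<nu>" by (auto simp: mem_shiftr mr)
    next
      assume h: "(x, y) \<in> \<nu>"
      with no have "x \<noteq> 1" by auto
      with h nr_bounds[OF nr h] lt[OF h] show "(x, y) \<in> shiftr 1 (restr 1 2 (Suc n) \<nu>)"
        by (auto simp: mem_shiftr mr)
    qed
  qed
qed

lemma NR_A_shift_no: "(1, j) \<notin> shiftr 1 \<nu>' \<or> (0, j - 1) \<in> \<nu>'"
  by (auto simp: mem_shiftr)

lemma restr_shiftr_A: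
  assumes nr: "nesting_rel n \<nu>"
  shows "restr 1 2 (Suc n) (shiftr 1 \<nu>) = \<nu>"
proof -
  have lt: "\<And>i j. (i, j) \<in> shiftr 1 \<nu> \<Longrightarrow> i < j" using NR_A[OF nr] nr_lt by blast
  note mr = mem_restr[of 1 2 "shiftr 1 \<nu>", OF _ lt, simplified]
  show ?thesis
    by (rule pair_set_eqI) (use nr_bounds[OF nr] in \<open>auto simp: mr mem_shiftr\<close>)
qed

lemma mem_comb: "(i, j) \<in> comb k \<nu>1 \<nu>2 \<longleftrightarrow> (i = 1 \<and> j = k + 2) \<or>
   (1 \<le> i \<and> 1 \<le> j \<and> (i - 1, j - 1) \<in> \<nu>1) \<or> (k + 2 \<le> i \<and> k + 2 \<le> j \<and> (i - (k + 2), j - (k + 2)) \<in> \<nu>2)"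
  unfolding comb_def by (auto simp: mem_shiftr)

lemma comb_cases:
  assumes "(i, j) \<in> comb k \<nu>1 \<nu>2" "nesting_rel k \<nu>1" "nesting_rel m \<nu>2"
  shows "(i = 1 \<and> j = k + 2) \<or> (2 \<le> i \<and> i < j \<and> j \<le> k + 1 \<and> (i - 1, j - 1) \<in> \<nu>1) \<or>
     (k + 3 \<le> i \<and> i < j \<and> j \<le> k + m + 2 \<and> (i - (k + 2), j - (k + 2)) \<in> \<nu>2)"
  using assms nr_bounds[OF assms(2), of "i - 1" "j - 1"] nr_lt[OF assms(2), of "i - 1" "j - 1"]
    nr_bounds[OF assms(3), of "i - (k+2)" "j - (k+2)"] nr_lt[OF assms(3), of "i - (k+2)" "j - (k+2)"]
  unfolding mem_comb by auto

lemma nr_cross_shift: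
  assumes "nesting_rel n \<nu>" "c \<le> i" "c \<le> i'" "c \<le> j" "c \<le> j'"
    "(i - c, j - c) \<in> \<nu>" "(i' - c, j' - c) \<in> \<nu>" "i < i'"
  shows "j < i' \<or> j' < j"
proof -
  have "i - c < i' - c" using assms by arith
  from nr_cross[OF assms(1,6,7) this] show ?thesis using assms by arith
qed

lemma NR_B:
  assumes n1: "nesting_rel k \<nu>1" and n2: "nesting_rel m \<nu>2"
  shows "nesting_rel (k + m + 2) (comb k \<nu>1 \<nu>2)"
proof (rule nr_intro)
  note cc = comb_cases[OF _ n1 n2]
  show "1 \<le> i \<and> i < j \<and> j \<le> k + m + 2" if "(i, j) \<in> comb k \<nu>1 \<nu>2" for i j
    using cc[OF that] by auto
  show "j = j'" if "(i, j) \<in> comb k \<nu>1 \<nu>2" "(i, j') \<in> comb k \<nu>1 \<nu>2" for i j j'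
    using cc[OF that(1)] cc[OF that(2)] nr_fun[OF n1, of "i - 1" "j - 1" "j' - 1"]
      nr_fun[OF n2, of "i - (k+2)" "j - (k+2)" "j' - (k+2)"] by auto
  show "i = i'" if "(i, j) \<in> comb k \<nu>1 \<nu>2" "(i', j) \<in> comb k \<nu>1 \<nu>2" for i i' j
    using cc[OF that(1)] cc[OF that(2)] nr_inj[OF n1, of "i - 1" "j - 1" "i' - 1"]
      nr_inj[OF n2, of "i - (k+2)" "j - (k+2)" "i' - (k+2)"] by auto
  show "j < i' \<or> j' < j" if "(i, j) \<in> comb k \<nu>1 \<nu>2" "(i', j') \<in> comb k \<nu>1 \<nu>2" "i < i'" for i j i' j'
    using cc[OF that(1)] cc[OF that(2)] that(3) nr_cross_shift[OF n1, of 1 i i' j j']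
      nr_cross_shift[OF n2, of "k+2" i i' j j'] by auto
qed

lemma comb_in: "(1, k + 2) \<in> comb k \<nu>1 \<nu>2"
  unfolding comb_def by simp

lemma NR_B_recover:
  assumes n1: "nesting_rel k \<nu>1" and n2: "nesting_rel m \<nu>2"
  shows "restr 1 2 (k + 1) (comb k \<nu>1 \<nu>2) = \<nu>1"
    "restr (k + 2) (k + 3) (k + m + 2) (comb k \<nu>1 \<nu>2) = \<nu>2"
proof -
  have lt: "\<And>i j. (i, j) \<in> comb k \<nu>1 \<nu>2 \<Longrightarrow> i < j" using NR_B[OF n1 n2] nr_lt by blast
  note cc = comb_cases[OF _ n1 n2]
  show "restr 1 2 (k + 1) (comb k \<nu>1 \<nu>2) = \<nu>1"
  proof (rule pair_set_eqI)
    fix x y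
    show "(x, y) \<in> restr 1 2 (k + 1) (comb k \<nu>1 \<nu>2) \<longleftrightarrow> (x, y) \<in> \<nu>1"
      using mem_restr[of 1 2 "comb k \<nu>1 \<nu>2", OF _ lt, of x y "k+1"] cc[of "x+1" "y+1"]
        nr_bounds[OF n1, of x y]
      by (auto simp: mem_comb)
  qed
  show "restr (k + 2) (k + 3) (k + m + 2) (comb k \<nu>1 \<nu>2) = \<nu>2"
  proof (rule pair_set_eqI)
    fix x y
    show "(x, y) \<in> restr (k + 2) (k + 3) (k + m + 2) (comb k \<nu>1 \<nu>2) \<longleftrightarrow> (x, y) \<in> \<nu>2"
      using mem_restr[of "k+2" "k+3" "comb k \<nu>1 \<nu>2", OF _ lt, of x y "k+m+2"] cc[of "x+(k+2)" "y+(k+2)"]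
        nr_bounds[OF n2, of x y]
      by (auto simp: mem_comb)
  qed
qed

lemma suc2: "2 \<le> x \<Longrightarrow> Suc (Suc (x - 2)) = x"
  by arith

lemma NR_B_inv:
  assumes nr: "nesting_rel (Suc n) \<nu>" and c: "(1, k + 2) \<in> \<nu>" and kn: "k < n"
  shows "nesting_rel k (restr 1 2 (k + 1) \<nu>)"
    "nesting_rel (n - Suc k) (restr (k + 2) (k + 3) (Suc n) \<nu>)"
    "comb k (restr 1 2 (k + 1) \<nu>) (restr (k + 2) (k + 3) (Suc n) \<nu>) = \<nu>"
proof -
  have lt: "\<And>i j. (i, j) \<in> \<nu> \<Longrightarrow> i < j" using nr nr_lt by blast
  note m1 = mem_restr[of 1 2 \<nu>, OF _ lt, simplified]
  note m2 = mem_restr[of "k+2" "k+3" \<nu>, OF _ lt, simplified]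
  show "nesting_rel k (restr 1 2 (k + 1) \<nu>)"
    apply (rule nr_intro)
    subgoal for i j using nr_lt[OF nr, of "i+1" "j+1"] nr_bounds[OF nr, of "i+1" "j+1"] by (auto simp: m1)
    subgoal for i j j' using nr_fun[OF nr, of "i+1" "j+1" "j'+1"] by (auto simp: m1)
    subgoal for i i' j using nr_inj[OF nr, of "i+1" "j+1" "i'+1"] by (auto simp: m1)
    subgoal for i j i' j' using nr_cross[OF nr, of "i+1" "j+1" "i'+1" "j'+1"] by (auto simp: m1)
    done
  show "nesting_rel (n - Suc k) (restr (k + 2) (k + 3) (Suc n) \<nu>)"
    apply (rule nr_intro)
    subgoal for i j using nr_lt[OF nr, of "i+(k+2)" "j+(k+2)"] nr_bounds[OF nr, of "i+(k+2)" "j+(k+2)"] by (auto simp: m2)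
    subgoal for i j j' using nr_fun[OF nr, of "i+(k+2)" "j+(k+2)" "j'+(k+2)"] by (auto simp: m2)
    subgoal for i i' j using nr_inj[OF nr, of "i+(k+2)" "j+(k+2)" "i'+(k+2)"] by (auto simp: m2)
    subgoal for i j i' j' using nr_cross[OF nr, of "i+(k+2)" "j+(k+2)" "i'+(k+2)" "j'+(k+2)"] by (auto simp: m2)
    done
  show "comb k (restr 1 2 (k + 1) \<nu>) (restr (k + 2) (k + 3) (Suc n) \<nu>) = \<nu>"
  proof (rule pair_set_eqI)
    fix x y
    show "(x, y) \<in> comb k (restr 1 2 (k + 1) \<nu>) (restr (k + 2) (k + 3) (Suc n) \<nu>) \<longleftrightarrow> (x, y) \<in> \<nu>"
    proof
      assume "(x, y) \<in> comb k (restr 1 2 (k + 1) \<nu>) (restr (k + 2) (k + 3) (Suc n) \<nu>)"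
      then show "(x, y) \<in> \<nu>" using c by (auto simp: mem_comb m1 m2 suc2)
    next
      assume h: "(x, y) \<in> \<nu>"
      show "(x, y) \<in> comb k (restr 1 2 (k + 1) \<nu>) (restr (k + 2) (k + 3) (Suc n) \<nu>)"
      proof (cases "x = 1")
        case True
        then have "y = k + 2" using nr_fun[OF nr c, of y] h by simp
        then show ?thesis using True by (simp add: comb_def)
      next
        case False
        then have x2: "2 \<le> x" using nr_bounds[OF nr h] by auto
        have xk: "x \<noteq> k + 2" using nr_not_call_ret[OF nr c, of y] h by auto
        from nr_cross[OF nr c h] x2 have "k + 2 < x \<or> y < k + 2" by auto
        then show ?thesis
          using x2 xk h nr_bounds[OF nr h] lt[OF h] by (auto simp: mem_comb m1 m2 suc2)
      qed
    qed
  qed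
qed

lemma NR_sum:
  "(\<Sum>\<nu>\<in>NR (Suc n). f \<nu>) = (\<Sum>\<nu>'\<in>NR n. f (shiftr 1 \<nu>')) +
     (\<Sum>k<n. \<Sum>\<nu>1\<in>NR k. \<Sum>\<nu>2\<in>NR (n - Suc k). f (comb k \<nu>1 \<nu>2))"
proof -
  have split: "f \<nu> = (if (\<forall>j. (1, j) \<notin> \<nu>) then f \<nu> else 0) + (\<Sum>k<n. if (1, k + 2) \<in> \<nu> then f \<nu> else 0)"
    if nu: "\<nu> \<in> NR (Suc n)" for \<nu>
  proof (cases "\<forall>j. (1, j) \<notin> \<nu>")
    case True
    then show ?thesis by simp
  next
    case False
    then obtain j where j: "(1, j) \<in> \<nu>" by auto
    have nr: "nesting_rel (Suc n) \<nu>" using nu by (simp add: NR_def)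
    have j2: "2 \<le> j" "j \<le> Suc n" using nr_lt[OF nr j] nr_bounds[OF nr j] by auto
    have eq: "(Suc 0, Suc (Suc k)) \<in> \<nu> \<longleftrightarrow> k = j - 2" for k
      using nr_fun[OF nr j, of "k+2"] j j2 by (auto simp: suc2)
    have "(\<Sum>k<n. if (1, k + 2) \<in> \<nu> then f \<nu> else 0) = (\<Sum>k<n. if k = j - 2 then f \<nu> else 0)"
      by (simp add: eq)
    also have "\<dots> = f \<nu>" using j2 by auto
    finally show ?thesis using False by auto
  qed
  have "(\<Sum>\<nu>\<in>NR (Suc n). f \<nu>) = (\<Sum>\<nu>\<in>NR (Suc n). (if (\<forall>j. (1, j) \<notin> \<nu>) then f \<nu> else 0)) +
     (\<Sum>k<n. \<Sum>\<nu>\<in>NR (Suc n). if (1, k + 2) \<in> \<nu> then f \<nu> else 0)"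
    by (subst sum.cong[OF refl split]) (simp_all add: sum.distrib sum.swap[of _ "{..<n}"])
  also have "(\<Sum>\<nu>\<in>NR (Suc n). (if (\<forall>j. (1, j) \<notin> \<nu>) then f \<nu> else 0)) = (\<Sum>\<nu>'\<in>NR n. f (shiftr 1 \<nu>'))"
  proof -
    have "(\<Sum>\<nu>\<in>NR (Suc n). (if (\<forall>j. (1, j) \<notin> \<nu>) then f \<nu> else 0)) =
        (\<Sum>\<nu>\<in>{\<nu>\<in>NR (Suc n). \<forall>j. (1, j) \<notin> \<nu>}. f \<nu>)"
      by (simp add: sum.inter_filter finite_NR)
    also have "\<dots> = (\<Sum>\<nu>'\<in>NR n. f (shiftr 1 \<nu>'))"
    proof (rule sum.reindex_bij_witness[where j="shiftr 1" and i="restr 1 2 (Suc n)", symmetric])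
      fix a assume "a \<in> NR n"
      then have a: "nesting_rel n a" by (simp add: NR_def)
      show "restr 1 2 (Suc n) (shiftr 1 a) = a" by (rule restr_shiftr_A[OF a])
      have "\<forall>j. (1, j) \<notin> shiftr 1 a"
        using nr_bounds[OF a] by (auto simp: mem_shiftr)
      then show "shiftr 1 a \<in> {\<nu> \<in> NR (Suc n). \<forall>j. (1, j) \<notin> \<nu>}"
        using NR_A[OF a] by (simp add: NR_def)
    next
      fix b assume "b \<in> {\<nu> \<in> NR (Suc n). \<forall>j. (1, j) \<notin> \<nu>}"
      then have b: "nesting_rel (Suc n) b" "\<And>j. (1, j) \<notin> b" by (auto simp: NR_def)
      show "shiftr 1 (restr 1 2 (Suc n) b) = b" by (rule NR_A_inv(2)[OF b])
      show "restr 1 2 (Suc n) b \<in> NR n" using NR_A_inv(1)[OF b] by (simp add: NR_def)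
    qed simp
    finally show ?thesis .
  qed
  also have "(\<Sum>k<n. \<Sum>\<nu>\<in>NR (Suc n). if (1, k + 2) \<in> \<nu> then f \<nu> else 0) =
     (\<Sum>k<n. \<Sum>\<nu>1\<in>NR k. \<Sum>\<nu>2\<in>NR (n - Suc k). f (comb k \<nu>1 \<nu>2))"
  proof (rule sum.cong[OF refl])
    fix k assume "k \<in> {..<n}"
    then have kn: "k < n" by simp
    have "(\<Sum>\<nu>\<in>NR (Suc n). if (1, k + 2) \<in> \<nu> then f \<nu> else 0) =
        (\<Sum>\<nu>\<in>{\<nu>\<in>NR (Suc n). (1, k + 2) \<in> \<nu>}. f \<nu>)"
      by (simp add: sum.inter_filter finite_NR)
    also have "\<dots> = (\<Sum>p\<in>NR k \<times> NR (n - Suc k). f (comb k (fst p) (snd p)))"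
    proof (rule sum.reindex_bij_witness[where j="\<lambda>p. comb k (fst p) (snd p)"
          and i="\<lambda>\<nu>. (restr 1 2 (k + 1) \<nu>, restr (k + 2) (k + 3) (Suc n) \<nu>)", symmetric])
      fix p assume p: "p \<in> NR k \<times> NR (n - Suc k)"
      have e: "k + (n - Suc k) + 2 = Suc n" using kn by simp
      from p show "(restr 1 2 (k + 1) (comb k (fst p) (snd p)), restr (k + 2) (k + 3) (Suc n) (comb k (fst p) (snd p))) = p"
        using NR_B_recover[of k "fst p" "n - Suc k" "snd p"] e by (auto simp: NR_def)
      from p show "comb k (fst p) (snd p) \<in> {\<nu> \<in> NR (Suc n). (1, k + 2) \<in> \<nu>}"
        using NR_B[of k "fst p" "n - Suc k" "snd p"] e by (auto simp: NR_def comb_def)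
    next
      fix \<nu> assume "\<nu> \<in> {\<nu> \<in> NR (Suc n). (1, k + 2) \<in> \<nu>}"
      then have "nesting_rel (Suc n) \<nu>" "(1, k + 2) \<in> \<nu>" by (auto simp: NR_def)
      from NR_B_inv[OF this kn]
      show "comb k (fst (restr 1 2 (k + 1) \<nu>, restr (k + 2) (k + 3) (Suc n) \<nu>))
         (snd (restr 1 2 (k + 1) \<nu>, restr (k + 2) (k + 3) (Suc n) \<nu>)) = \<nu>"
        "(restr 1 2 (k + 1) \<nu>, restr (k + 2) (k + 3) (Suc n) \<nu>) \<in> NR k \<times> NR (n - Suc k)"
        by (auto simp: NR_def)
    qed simp
    also have "\<dots> = (\<Sum>\<nu>1\<in>NR k. \<Sum>\<nu>2\<in>NR (n - Suc k). f (comb k \<nu>1 \<nu>2))"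
      by (simp add: sum.cartesian_product split_def)
    finally show "(\<Sum>\<nu>\<in>NR (Suc n). if (1, k + 2) \<in> \<nu> then f \<nu> else 0) =
      (\<Sum>\<nu>1\<in>NR k. \<Sum>\<nu>2\<in>NR (n - Suc k). f (comb k \<nu>1 \<nu>2))" .
  qed
  finally show ?thesis .
qed

section \<open>Step weights\<close>

lemma sw_ret:
  assumes "nesting_rel n \<nu>" "(i, j) \<in> \<nu>"
  shows "step_weight A (w, \<nu>) qs j = dret A (qs ! (j - 1)) (qs ! (i - 1)) (w ! (j - 1)) (qs ! j)"
proof -
  have "(THE i. (i, j) \<in> \<nu>) = i"
    by (rule the_equality) (use assms nr_inj in blast)+
  then show ?thesis using assms unfolding step_weight_def Let_def by auto
qed

lemma sw_call:
  assumes "nesting_rel n \<nu>" "(j, j') \<in> \<nu>"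
  shows "step_weight A (w, \<nu>) qs j = dcall A (qs ! (j - 1)) (w ! (j - 1)) (qs ! j)"
proof -
  have "\<not> (\<exists>i. (i, j) \<in> \<nu>)" using assms nr_not_call_ret by blast
  then show ?thesis using assms unfolding step_weight_def Let_def by auto
qed

lemma sw_int:
  assumes "\<And>i. (i, j) \<notin> \<nu>" "\<And>j'. (j, j') \<notin> \<nu>"
  shows "step_weight A (w, \<nu>) qs j = dint A (qs ! (j - 1)) (w ! (j - 1)) (qs ! j)"
  using assms unfolding step_weight_def Let_def by auto

lemma sw_transfer:
  assumes nb: "nesting_rel N \<nu>" and ns: "nesting_rel n \<nu>'"
    and j: "1 \<le> j" "j \<le> n"
    and ret1: "\<And>x. (x, j + c) \<in> \<nu> \<Longrightarrow> \<exists>i. x = i + c \<and> (i, j) \<in> \<nu>'"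
    and ret2: "\<And>i. (i, j) \<in> \<nu>' \<Longrightarrow> (i + c, j + c) \<in> \<nu>"
    and call: "(\<exists>y. (j + c, y) \<in> \<nu>) \<longleftrightarrow> (\<exists>y. (j, y) \<in> \<nu>')"
    and st: "\<And>x. x \<le> n \<Longrightarrow> QS ! (x + c) = qs ! x"
    and lt: "\<And>x. x < n \<Longrightarrow> W ! (x + c) = w ! x"
  shows "step_weight A (W, \<nu>) QS (j + c) = step_weight A (w, \<nu>') qs j"
proof (cases "\<exists>i. (i, j) \<in> \<nu>'")
  case True
  then obtain i where i: "(i, j) \<in> \<nu>'" by blast
  have ib: "1 \<le> i" "i < j" using nr_bounds[OF ns i] nr_lt[OF ns i] by auto
  have e1: "QS ! (j + c - 1) = qs ! (j - 1)" "QS ! (i + c - 1) = qs ! (i - 1)" "W ! (j + c - 1) = w ! (j - 1)"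
  proof -
    have "j + c - 1 = (j - 1) + c" "i + c - 1 = (i - 1) + c" using j ib by auto
    then show "QS ! (j + c - 1) = qs ! (j - 1)" "QS ! (i + c - 1) = qs ! (i - 1)" "W ! (j + c - 1) = w ! (j - 1)"
      using st[of "j - 1"] st[of "i - 1"] lt[of "j - 1"] j ib by auto
  qed
  show ?thesis
    unfolding sw_ret[OF nb ret2[OF i]] sw_ret[OF ns i] e1
    using j by (simp add: st)
next
  case False
  then have nr: "\<And>x. (x, j + c) \<notin> \<nu>" using ret1 by blast
  have e1: "QS ! (j + c - 1) = qs ! (j - 1)" "W ! (j + c - 1) = w ! (j - 1)"
  proof -
    have "j + c - 1 = (j - 1) + c" using j by auto
    then show "QS ! (j + c - 1) = qs ! (j - 1)" "W ! (j + c - 1) = w ! (j - 1)"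
      using st[of "j - 1"] lt[of "j - 1"] j by auto
  qed
  show ?thesis
  proof (cases "\<exists>y. (j, y) \<in> \<nu>'")
    case True
    then obtain y where y: "(j, y) \<in> \<nu>'" by blast
    from True call obtain y' where y': "(j + c, y') \<in> \<nu>" by blast
    show ?thesis unfolding sw_call[OF nb y'] sw_call[OF ns y] e1 using j by (simp add: st lt)
  next
    case F2: False
    then have "\<And>y. (j + c, y) \<notin> \<nu>" using call by blast
    then have L: "step_weight A (W, \<nu>) QS (j + c) = dint A (QS ! (j + c - 1)) (W ! (j + c - 1)) (QS ! (j + c))"
      using nr by (intro sw_int) auto
    have R: "step_weight A (w, \<nu>') qs j = dint A (qs ! (j - 1)) (w ! (j - 1)) (qs ! j)"
      using False F2 by (intro sw_int) auto
    show ?thesis unfolding L R e1 using j by (simp add: st)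
  qed
qed

lemma prodA: "prod (f :: nat \<Rightarrow> 'b::comm_monoid_mult) {1..Suc n} = f 1 * prod (\<lambda>j. f (j + 1)) {1..n}"
proof -
  have "prod f {1..Suc n} = f 1 * prod f {Suc 1..Suc n}"
    by (rule prod.atLeast_Suc_atMost) simp
  also have "prod f {Suc 1..Suc n} = prod (\<lambda>j. f (j + 1)) {1..n}"
    by (subst prod.shift_bounds_cl_Suc_ivl) simp
  finally show ?thesis .
qed

lemma prodB: "prod (f :: nat \<Rightarrow> 'b::comm_monoid_mult) {1..k + m + 2} = f 1 * prod (\<lambda>j. f (j + 1)) {1..k} * f (k + 2) * prod (\<lambda>j. f (j + (k + 2))) {1..m}"
proof (induction m)
  case 0
  have h1: "prod f {1..Suc (Suc k)} = prod f {1..Suc k} * f (Suc (Suc k))" by simp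
  have h2: "prod f {1..Suc k} = f 1 * prod (\<lambda>j. f (j + 1)) {1..k}" by (rule prodA)
  have h3: "k + 0 + 2 = Suc (Suc k)" by simp
  show ?case unfolding h3 h1 h2 by simp
next
  case (Suc m)
  have "prod f {1..k + Suc m + 2} = prod f {1..k + m + 2} * f (Suc m + (k + 2))"
    by (simp add: ac_simps)
  then show ?case using Suc by (simp add: ac_simps)
qed

definition Wt :: "('a, 'k::comm_semiring_1) wnwa \<Rightarrow> 'a list \<Rightarrow> (nat \<times> nat) set \<Rightarrow> nat list \<Rightarrow> 'k" where
  "Wt A w \<nu> qs = (\<Prod>j\<in>{1..length w}. step_weight A (w, \<nu>) qs j)"

lemma WtA:
  assumes ns: "nesting_rel n \<nu>'" and lw: "length w = n" and lq: "length qs' = Suc n"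
  shows "Wt A (a # w) (shiftr 1 \<nu>') (p # qs') = dint A p a (qs' ! 0) * Wt A w \<nu>' qs'"
proof -
  have nb: "nesting_rel (Suc n) (shiftr 1 \<nu>')" by (rule NR_A[OF ns])
  have s1: "step_weight A (a # w, shiftr 1 \<nu>') (p # qs') 1 = dint A p a (qs' ! 0)"
  proof -
    have "(i, 1) \<notin> shiftr 1 \<nu>'" for i using nr_bounds[OF ns] nr_lt[OF ns] by (auto simp: mem_shiftr)
    moreover have "(1, j') \<notin> shiftr 1 \<nu>'" for j' using nr_bounds[OF ns] by (auto simp: mem_shiftr)
    ultimately show ?thesis by (simp add: sw_int)
  qed
  have s2: "step_weight A (a # w, shiftr 1 \<nu>') (p # qs') (j + 1) = step_weight A (w, \<nu>') qs' j"
    if "j \<in> {1..n}" for j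
  proof (rule sw_transfer[OF nb ns])
    show "1 \<le> j" "j \<le> n" using that by auto
    show "\<exists>i. x = i + 1 \<and> (i, j) \<in> \<nu>'" if "(x, j + 1) \<in> shiftr 1 \<nu>'" for x
      using that by (auto simp: mem_shiftr intro!: exI[of _ "x - 1"])
    show "(i + 1, j + 1) \<in> shiftr 1 \<nu>'" if "(i, j) \<in> \<nu>'" for i
      using that by (auto simp: mem_shiftr)
    show "(\<exists>y. (j + 1, y) \<in> shiftr 1 \<nu>') = (\<exists>y. (j, y) \<in> \<nu>')"
    proof
      assume "\<exists>y. (j + 1, y) \<in> shiftr 1 \<nu>'"
      then show "\<exists>y. (j, y) \<in> \<nu>'" by (auto simp: mem_shiftr)
    next
      assume "\<exists>y. (j, y) \<in> \<nu>'"
      then obtain y where "(j, y) \<in> \<nu>'" by blast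
      then have "(j + 1, y + 1) \<in> shiftr 1 \<nu>'" by (auto simp: mem_shiftr)
      then show "\<exists>y. (j + 1, y) \<in> shiftr 1 \<nu>'" by blast
    qed
  qed auto
  have "prod (\<lambda>j. step_weight A (a # w, shiftr 1 \<nu>') (p # qs') (j + 1)) {1..n} = prod (step_weight A (w, \<nu>') qs') {1..n}"
    by (rule prod.cong[OF refl s2])
  then show ?thesis
    unfolding Wt_def using lw by (simp only: length_Cons prodA s1)
qed

lemma WtB:
  assumes n1: "nesting_rel k \<nu>1" and n2: "nesting_rel m \<nu>2"
    and lu: "length u = k" and lv: "length v = m"
    and l1: "length qs1 = Suc k" and l2: "length qs2 = Suc m"
  shows "Wt A (a # u @ b # v) (comb k \<nu>1 \<nu>2) (p # qs1 @ qs2) =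
    dcall A p a (qs1 ! 0) * Wt A u \<nu>1 qs1 * dret A (qs1 ! k) p b (qs2 ! 0) * Wt A v \<nu>2 qs2"
proof -
  let ?W = "a # u @ b # v" and ?Q = "p # qs1 @ qs2" and ?n = "comb k \<nu>1 \<nu>2"
  have nb: "nesting_rel (k + m + 2) ?n" by (rule NR_B[OF n1 n2])
  note cc = comb_cases[OF _ n1 n2]
  have ci: "(1, k + 2) \<in> ?n" by (rule comb_in)
  have s1: "step_weight A (?W, ?n) ?Q 1 = dcall A p a (qs1 ! 0)"
    unfolding sw_call[OF nb ci] using l1 by (simp add: nth_append)
  have sk: "step_weight A (?W, ?n) ?Q (k + 2) = dret A (qs1 ! k) p b (qs2 ! 0)"
    unfolding sw_ret[OF nb ci] using l1 lu by (simp add: nth_append)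
  have p1: "step_weight A (?W, ?n) ?Q (j + 1) = step_weight A (u, \<nu>1) qs1 j" if "j \<in> {1..k}" for j
  proof (rule sw_transfer[OF nb n1])
    show j: "1 \<le> j" "j \<le> k" using that by auto
    show "\<exists>i. x = i + 1 \<and> (i, j) \<in> \<nu>1" if "(x, j + 1) \<in> ?n" for x
      using cc[OF that] j by (auto intro!: exI[of _ "x - 1"])
    show "(i + 1, j + 1) \<in> ?n" if "(i, j) \<in> \<nu>1" for i
      using that by (auto simp: mem_comb)
    show "(\<exists>y. (j + 1, y) \<in> ?n) = (\<exists>y. (j, y) \<in> \<nu>1)"
    proof
      assume "\<exists>y. (j + 1, y) \<in> ?n"
      then obtain y where y: "(j + 1, y) \<in> ?n" by blast
      show "\<exists>y. (j, y) \<in> \<nu>1" using cc[OF y] j by auto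
    next
      assume "\<exists>y. (j, y) \<in> \<nu>1"
      then obtain y where "(j, y) \<in> \<nu>1" by blast
      then have "(j + 1, y + 1) \<in> ?n" by (auto simp: mem_comb)
      then show "\<exists>y. (j + 1, y) \<in> ?n" by blast
    qed
    show "?Q ! (x + 1) = qs1 ! x" if "x \<le> k" for x
      using that l1 by (simp add: nth_append)
    show "?W ! (x + 1) = u ! x" if "x < k" for x
      using that lu by (simp add: nth_append)
  qed
  have p2: "step_weight A (?W, ?n) ?Q (j + (k + 2)) = step_weight A (v, \<nu>2) qs2 j" if "j \<in> {1..m}" for j
  proof (rule sw_transfer[OF nb n2])
    show j: "1 \<le> j" "j \<le> m" using that by auto
    show "\<exists>i. x = i + (k + 2) \<and> (i, j) \<in> \<nu>2" if "(x, j + (k + 2)) \<in> ?n" for x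
      using cc[OF that] j by (auto intro!: exI[of _ "x - (k + 2)"])
    show "(i + (k + 2), j + (k + 2)) \<in> ?n" if "(i, j) \<in> \<nu>2" for i
      using that by (auto simp: mem_comb)
    show "(\<exists>y. (j + (k + 2), y) \<in> ?n) = (\<exists>y. (j, y) \<in> \<nu>2)"
    proof
      assume "\<exists>y. (j + (k + 2), y) \<in> ?n"
      then obtain y where y: "(j + (k + 2), y) \<in> ?n" by blast
      show "\<exists>y. (j, y) \<in> \<nu>2" using cc[OF y] j by auto
    next
      assume "\<exists>y. (j, y) \<in> \<nu>2"
      then obtain y where "(j, y) \<in> \<nu>2" by blast
      then have "(j + (k + 2), y + (k + 2)) \<in> ?n" by (auto simp: mem_comb)
      then show "\<exists>y. (j + (k + 2), y) \<in> ?n" by blast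
    qed
    show "?Q ! (x + (k + 2)) = qs2 ! x" if "x \<le> m" for x
      using that l1 by (simp add: nth_append)
    show "?W ! (x + (k + 2)) = v ! x" if "x < m" for x
      using that lu by (simp add: nth_append)
  qed
  have e1: "prod (\<lambda>j. step_weight A (?W, ?n) ?Q (j + 1)) {1..k} = prod (step_weight A (u, \<nu>1) qs1) {1..k}"
    by (rule prod.cong[OF refl p1])
  have e2: "prod (\<lambda>j. step_weight A (?W, ?n) ?Q (j + (k + 2))) {1..m} = prod (step_weight A (v, \<nu>2) qs2) {1..m}"
    by (rule prod.cong[OF refl p2])
  have len: "length ?W = k + m + 2" using lu lv by simp
  show ?thesis
    unfolding Wt_def len prodB s1 sk e1 e2 lu lv by (simp add: ac_simps)
qed

section \<open>Runs\<close>

lemma finite_runs: "finite (states A) \<Longrightarrow> finite (runs A n)"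
  unfolding runs_def using finite_lists_length_eq[of "states A" "Suc n"]
  by (simp add: conj_commute)

lemma runs_cons_sum:
  assumes fin: "finite (states A)" and p: "p \<in> states A"
  shows "(\<Sum>qs\<in>runs A (Suc n). if qs ! 0 = p then g qs else 0) = (\<Sum>qs'\<in>runs A n. g (p # qs'))"
proof -
  have "(\<Sum>qs\<in>runs A (Suc n). if qs ! 0 = p then g qs else 0) = (\<Sum>qs\<in>{qs\<in>runs A (Suc n). qs ! 0 = p}. g qs)"
    by (rule sum.inter_filter[symmetric]) (simp add: finite_runs fin)
  also have "\<dots> = (\<Sum>qs'\<in>runs A n. g (p # qs'))"
  proof (rule sum.reindex_bij_witness[where j="\<lambda>qs'. p # qs'" and i=tl, symmetric])
    fix b assume b: "b \<in> {qs \<in> runs A (Suc n). qs ! 0 = p}"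
    then obtain x xs where "b = x # xs" unfolding runs_def by (cases b) auto
    with b show "p # tl b = b" "tl b \<in> runs A n" unfolding runs_def by auto
  qed (use p in \<open>auto simp: runs_def\<close>)
  finally show ?thesis .
qed

lemma runs_app_sum:
  assumes fin: "finite (states A)"
  shows "(\<Sum>qs\<in>runs A (Suc (k + m)). g qs) = (\<Sum>qs1\<in>runs A k. \<Sum>qs2\<in>runs A m. g (qs1 @ qs2))"
proof -
  have "(\<Sum>qs\<in>runs A (Suc (k + m)). g qs) = (\<Sum>x\<in>runs A k \<times> runs A m. g (fst x @ snd x))"
  proof (rule sum.reindex_bij_witness[where j="\<lambda>x. fst x @ snd x" and i="\<lambda>qs. (take (Suc k) qs, drop (Suc k) qs)", symmetric])
    fix b assume b: "b \<in> runs A (Suc (k + m))"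
    then show "fst (take (Suc k) b, drop (Suc k) b) @ snd (take (Suc k) b, drop (Suc k) b) = b" by simp
    from b show "(take (Suc k) b, drop (Suc k) b) \<in> runs A k \<times> runs A m"
      unfolding runs_def by (auto dest: in_set_takeD in_set_dropD)
  next
    fix a assume a: "a \<in> runs A k \<times> runs A m"
    then show "(take (Suc k) (fst a @ snd a), drop (Suc k) (fst a @ snd a)) = a"
      unfolding runs_def by auto
    from a show "fst a @ snd a \<in> runs A (Suc (k + m))" unfolding runs_def by auto
  qed simp
  also have "\<dots> = (\<Sum>qs1\<in>runs A k. \<Sum>qs2\<in>runs A m. g (qs1 @ qs2))"
    by (simp add: sum.cartesian_product split_def)
  finally show ?thesis .
qed

lemma sum_pick:
  assumes fin: "finite Q" and f: "\<And>x. x \<in> S \<Longrightarrow> f x \<in> Q"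
  shows "(\<Sum>x\<in>S. H (f x) * (X x :: 'k::comm_semiring_1)) = (\<Sum>r\<in>Q. H r * (\<Sum>x\<in>S. if f x = r then X x else 0))"
proof -
  have "(\<Sum>r\<in>Q. H r * (\<Sum>x\<in>S. if f x = r then X x else 0)) = (\<Sum>r\<in>Q. \<Sum>x\<in>S. if f x = r then H r * X x else 0)"
    by (intro sum.cong refl) (auto simp: sum_distrib_left intro: sum.cong)
  also have "\<dots> = (\<Sum>x\<in>S. \<Sum>r\<in>Q. if f x = r then H r * X x else 0)"
    by (rule sum.swap)
  also have "\<dots> = (\<Sum>x\<in>S. H (f x) * X x)"
    by (rule sum.cong) (use fin f in auto)
  finally show ?thesis by simp
qed

lemma run_nth_in: "qs \<in> runs A n \<Longrightarrow> i \<le> n \<Longrightarrow> qs ! i \<in> states A"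
  unfolding runs_def by (auto simp: subset_iff)

lemma GA:
  assumes fin: "finite (states A)" and p: "p \<in> states A" and nu: "\<nu>' \<in> NR n" and lw: "length w = n"
  shows "(\<Sum>qs\<in>runs A (Suc n). if qs ! 0 = p \<and> qs ! Suc n = q then Wt A (a # w) (shiftr 1 \<nu>') qs else 0) =
    (\<Sum>r\<in>states A. dint A p a r * (\<Sum>qs'\<in>runs A n. if qs' ! 0 = r \<and> qs' ! n = q then Wt A w \<nu>' qs' else 0))"
proof -
  have ns: "nesting_rel n \<nu>'" using nu by (simp add: NR_def)
  have "(\<Sum>qs\<in>runs A (Suc n). if qs ! 0 = p \<and> qs ! Suc n = q then Wt A (a # w) (shiftr 1 \<nu>') qs else 0) =
     (\<Sum>qs\<in>runs A (Suc n). if qs ! 0 = p then (if qs ! Suc n = q then Wt A (a # w) (shiftr 1 \<nu>') qs else 0) else 0)"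
    by (rule sum.cong) auto
  also have "\<dots> = (\<Sum>qs'\<in>runs A n. if (p # qs') ! Suc n = q then Wt A (a # w) (shiftr 1 \<nu>') (p # qs') else 0)"
    by (rule runs_cons_sum[OF fin p])
  also have "\<dots> = (\<Sum>qs'\<in>runs A n. dint A p a (qs' ! 0) * (if qs' ! n = q then Wt A w \<nu>' qs' else 0))"
  proof (rule sum.cong[OF refl])
    fix qs' assume "qs' \<in> runs A n"
    then have lq: "length qs' = Suc n" by (simp add: runs_def)
    show "(if (p # qs') ! Suc n = q then Wt A (a # w) (shiftr 1 \<nu>') (p # qs') else 0) =
      dint A p a (qs' ! 0) * (if qs' ! n = q then Wt A w \<nu>' qs' else 0)"
      using WtA[OF ns lw lq, of A a p] by simp
  qed
  also have "\<dots> = (\<Sum>r\<in>states A. dint A p a r * (\<Sum>qs'\<in>runs A n. if qs' ! 0 = r then (if qs' ! n = q then Wt A w \<nu>' qs' else 0) else 0))"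
    by (rule sum_pick[OF fin]) (simp add: run_nth_in)
  also have "\<dots> = (\<Sum>r\<in>states A. dint A p a r * (\<Sum>qs'\<in>runs A n. if qs' ! 0 = r \<and> qs' ! n = q then Wt A w \<nu>' qs' else 0))"
    by (intro sum.cong refl arg_cong2[where f="(*)"]) auto
  finally show ?thesis .
qed
lemma GB:
  assumes fin: "finite (states A)" and p: "p \<in> states A" and nu1: "\<nu>1 \<in> NR k" and nu2: "\<nu>2 \<in> NR m"
    and lu: "length u = k" and lv: "length v = m"
  shows "(\<Sum>qs\<in>runs A (Suc (Suc (k + m))). if qs ! 0 = p \<and> qs ! Suc (Suc (k + m)) = q then Wt A (a # u @ b # v) (comb k \<nu>1 \<nu>2) qs else 0) =
    (\<Sum>r\<in>states A. \<Sum>s\<in>states A. \<Sum>t\<in>states A. dcall A p a r *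
        (\<Sum>qs1\<in>runs A k. if qs1 ! 0 = r \<and> qs1 ! k = s then Wt A u \<nu>1 qs1 else 0) * dret A s p b t *
        (\<Sum>qs2\<in>runs A m. if qs2 ! 0 = t \<and> qs2 ! m = q then Wt A v \<nu>2 qs2 else 0))"
proof -
  have n1: "nesting_rel k \<nu>1" and n2: "nesting_rel m \<nu>2" using nu1 nu2 by (auto simp: NR_def)
  define Y2 where "Y2 t = (\<Sum>qs2\<in>runs A m. if qs2 ! 0 = t \<and> qs2 ! m = q then Wt A v \<nu>2 qs2 else 0)" for t
  define Y1 where "Y1 r s = (\<Sum>qs1\<in>runs A k. if qs1 ! 0 = r \<and> qs1 ! k = s then Wt A u \<nu>1 qs1 else 0)" for r s
  define K where "K s = (\<Sum>t\<in>states A. dret A s p b t * Y2 t)" for s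
  let ?W = "a # u @ b # v" and ?n = "comb k \<nu>1 \<nu>2"
  have "(\<Sum>qs\<in>runs A (Suc (Suc (k + m))). if qs ! 0 = p \<and> qs ! Suc (Suc (k + m)) = q then Wt A ?W ?n qs else 0) =
     (\<Sum>qs\<in>runs A (Suc (Suc (k + m))). if qs ! 0 = p then (if qs ! Suc (Suc (k + m)) = q then Wt A ?W ?n qs else 0) else 0)"
    by (rule sum.cong) auto
  also have "\<dots> = (\<Sum>qs'\<in>runs A (Suc (k + m)). if (p # qs') ! Suc (Suc (k + m)) = q then Wt A ?W ?n (p # qs') else 0)"
    by (rule runs_cons_sum[OF fin p])
  also have "\<dots> = (\<Sum>qs1\<in>runs A k. \<Sum>qs2\<in>runs A m. if (p # qs1 @ qs2) ! Suc (Suc (k + m)) = q then Wt A ?W ?n (p # qs1 @ qs2) else 0)"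
    by (rule runs_app_sum[OF fin])
  also have "\<dots> = (\<Sum>qs1\<in>runs A k. \<Sum>qs2\<in>runs A m. (dcall A p a (qs1 ! 0) * Wt A u \<nu>1 qs1) *
       (dret A (qs1 ! k) p b (qs2 ! 0) * (if qs2 ! m = q then Wt A v \<nu>2 qs2 else 0)))"
  proof (intro sum.cong refl)
    fix qs1 qs2 assume q1: "qs1 \<in> runs A k" and q2: "qs2 \<in> runs A m"
    then have l1: "length qs1 = Suc k" and l2: "length qs2 = Suc m" by (auto simp: runs_def)
    have ix: "(p # qs1 @ qs2) ! Suc (Suc (k + m)) = qs2 ! m" using l1 by (simp add: nth_append)
    show "(if (p # qs1 @ qs2) ! Suc (Suc (k + m)) = q then Wt A ?W ?n (p # qs1 @ qs2) else 0) =
      (dcall A p a (qs1 ! 0) * Wt A u \<nu>1 qs1) * (dret A (qs1 ! k) p b (qs2 ! 0) * (if qs2 ! m = q then Wt A v \<nu>2 qs2 else 0))"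
      unfolding ix WtB[OF n1 n2 lu lv l1 l2] by (simp add: ac_simps)
  qed
  also have "\<dots> = (\<Sum>qs1\<in>runs A k. (dcall A p a (qs1 ! 0) * Wt A u \<nu>1 qs1) * K (qs1 ! k))"
  proof (intro sum.cong refl)
    fix qs1 assume q1: "qs1 \<in> runs A k"
    have "(\<Sum>qs2\<in>runs A m. dret A (qs1 ! k) p b (qs2 ! 0) * (if qs2 ! m = q then Wt A v \<nu>2 qs2 else 0)) =
      (\<Sum>t\<in>states A. dret A (qs1 ! k) p b t * (\<Sum>qs2\<in>runs A m. if qs2 ! 0 = t then (if qs2 ! m = q then Wt A v \<nu>2 qs2 else 0) else 0))"
      by (rule sum_pick[OF fin]) (simp add: run_nth_in)
    also have "\<dots> = K (qs1 ! k)"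
      unfolding K_def Y2_def by (intro sum.cong refl arg_cong2[where f="(*)"]) auto
    finally show "(\<Sum>qs2\<in>runs A m. (dcall A p a (qs1 ! 0) * Wt A u \<nu>1 qs1) *
       (dret A (qs1 ! k) p b (qs2 ! 0) * (if qs2 ! m = q then Wt A v \<nu>2 qs2 else 0))) =
       (dcall A p a (qs1 ! 0) * Wt A u \<nu>1 qs1) * K (qs1 ! k)"
      by (simp add: sum_distrib_left[symmetric])
  qed
  also have "\<dots> = (\<Sum>qs1\<in>runs A k. (\<lambda>(r, s). dcall A p a r * K s) (qs1 ! 0, qs1 ! k) * Wt A u \<nu>1 qs1)"
    by (simp add: ac_simps)
  also have "\<dots> = (\<Sum>rs\<in>states A \<times> states A. (\<lambda>(r, s). dcall A p a r * K s) rs *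
       (\<Sum>qs1\<in>runs A k. if (qs1 ! 0, qs1 ! k) = rs then Wt A u \<nu>1 qs1 else 0))"
    by (rule sum_pick[where f="\<lambda>qs1. (qs1 ! 0, qs1 ! k)"]) (simp_all add: fin run_nth_in)
  also have "\<dots> = (\<Sum>r\<in>states A. \<Sum>s\<in>states A. dcall A p a r * K s * Y1 r s)"
    unfolding Y1_def sum.cartesian_product by (rule sum.cong) (auto simp: case_prod_beta intro!: sum.cong)
  also have "\<dots> = (\<Sum>r\<in>states A. \<Sum>s\<in>states A. \<Sum>t\<in>states A. dcall A p a r * Y1 r s * dret A s p b t * Y2 t)"
    unfolding K_def by (simp add: sum_distrib_left sum_distrib_right ac_simps)
  finally show ?thesis unfolding Y1_def Y2_def .
qed

lemma swap_in: "(\<Sum>x\<in>A. \<Sum>y\<in>B. \<Sum>r\<in>C. h x y r) = (\<Sum>r\<in>C. \<Sum>x\<in>A. \<Sum>y\<in>B. (h x y r :: 'k::comm_monoid_add))"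
proof -
  have "(\<Sum>x\<in>A. \<Sum>y\<in>B. \<Sum>r\<in>C. h x y r) = (\<Sum>x\<in>A. \<Sum>r\<in>C. \<Sum>y\<in>B. h x y r)"
    by (rule sum.cong[OF refl], rule sum.swap)
  also have "\<dots> = (\<Sum>r\<in>C. \<Sum>x\<in>A. \<Sum>y\<in>B. h x y r)"
    by (rule sum.swap)
  finally show ?thesis .
qed

lemma swap5:
  "(\<Sum>x\<in>A. \<Sum>y\<in>B. \<Sum>r\<in>C. \<Sum>s\<in>D. \<Sum>t\<in>E. F r s t * X x r s * G r s t * Y y t) =
   (\<Sum>r\<in>C. \<Sum>s\<in>D. \<Sum>t\<in>E. F r s t * (\<Sum>x\<in>A. X x r s) * G r s t * (\<Sum>y\<in>B. (Y y t :: 'k::comm_semiring_1)))"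
proof -
  have "(\<Sum>x\<in>A. \<Sum>y\<in>B. \<Sum>r\<in>C. \<Sum>s\<in>D. \<Sum>t\<in>E. F r s t * X x r s * G r s t * Y y t) =
     (\<Sum>r\<in>C. \<Sum>s\<in>D. \<Sum>t\<in>E. \<Sum>x\<in>A. \<Sum>y\<in>B. F r s t * X x r s * G r s t * Y y t)"
  proof -
    have "(\<Sum>x\<in>A. \<Sum>y\<in>B. \<Sum>r\<in>C. \<Sum>s\<in>D. \<Sum>t\<in>E. F r s t * X x r s * G r s t * Y y t) =
      (\<Sum>r\<in>C. \<Sum>x\<in>A. \<Sum>y\<in>B. \<Sum>s\<in>D. \<Sum>t\<in>E. F r s t * X x r s * G r s t * Y y t)"
      by (rule swap_in)
    also have "\<dots> = (\<Sum>r\<in>C. \<Sum>s\<in>D. \<Sum>x\<in>A. \<Sum>y\<in>B. \<Sum>t\<in>E. F r s t * X x r s * G r s t * Y y t)"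
      by (rule sum.cong[OF refl], rule swap_in)
    also have "\<dots> = (\<Sum>r\<in>C. \<Sum>s\<in>D. \<Sum>t\<in>E. \<Sum>x\<in>A. \<Sum>y\<in>B. F r s t * X x r s * G r s t * Y y t)"
      by (rule sum.cong[OF refl], rule sum.cong[OF refl], rule swap_in)
    finally show ?thesis .
  qed
  also have "\<dots> = (\<Sum>r\<in>C. \<Sum>s\<in>D. \<Sum>t\<in>E. F r s t * (\<Sum>x\<in>A. X x r s) * G r s t * (\<Sum>y\<in>B. Y y t))"
    by (simp add: sum_distrib_left sum_distrib_right ac_simps)
  finally show ?thesis .
qed

definition Wp :: "('a, 'k::comm_semiring_1) wnwa \<Rightarrow> nat \<Rightarrow> nat \<Rightarrow> 'a list \<Rightarrow> 'k" where
  "Wp A p q w = (\<Sum>\<nu>\<in>NR (length w). \<Sum>qs\<in>runs A (length w).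
      if qs ! 0 = p \<and> qs ! length w = q then Wt A w \<nu> qs else 0)"

lemma Wp_cons:
  assumes fin: "finite (states A)" and p: "p \<in> states A"
  shows "Wp A p q (a # w) = (\<Sum>r\<in>states A. dint A p a r * Wp A r q w) +
    (\<Sum>k<length w. \<Sum>r\<in>states A. \<Sum>s\<in>states A. \<Sum>t\<in>states A.
        dcall A p a r * Wp A r s (take k w) * dret A s p (w ! k) t * Wp A t q (drop (Suc k) w))"
proof -
  define n where "n = length w"
  define G where "G \<nu> = (\<Sum>qs\<in>runs A (Suc n). if qs ! 0 = p \<and> qs ! Suc n = q then Wt A (a # w) \<nu> qs else 0)" for \<nu>
  have "Wp A p q (a # w) = (\<Sum>\<nu>\<in>NR (Suc n). G \<nu>)"
    unfolding Wp_def G_def n_def by simp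
  also have "\<dots> = (\<Sum>\<nu>'\<in>NR n. G (shiftr 1 \<nu>')) + (\<Sum>k<n. \<Sum>\<nu>1\<in>NR k. \<Sum>\<nu>2\<in>NR (n - Suc k). G (comb k \<nu>1 \<nu>2))"
    by (rule NR_sum)
  also have "(\<Sum>\<nu>'\<in>NR n. G (shiftr 1 \<nu>')) = (\<Sum>r\<in>states A. dint A p a r * Wp A r q w)"
  proof -
    have "(\<Sum>\<nu>'\<in>NR n. G (shiftr 1 \<nu>')) = (\<Sum>\<nu>'\<in>NR n. \<Sum>r\<in>states A. dint A p a r *
        (\<Sum>qs'\<in>runs A n. if qs' ! 0 = r \<and> qs' ! n = q then Wt A w \<nu>' qs' else 0))"
      unfolding G_def by (intro sum.cong refl GA[OF fin p]) (simp_all add: n_def)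
    also have "\<dots> = (\<Sum>r\<in>states A. dint A p a r * (\<Sum>\<nu>'\<in>NR n.
        (\<Sum>qs'\<in>runs A n. if qs' ! 0 = r \<and> qs' ! n = q then Wt A w \<nu>' qs' else 0)))"
      by (subst sum.swap) (simp add: sum_distrib_left)
    finally show ?thesis unfolding Wp_def n_def .
  qed
  also have "(\<Sum>k<n. \<Sum>\<nu>1\<in>NR k. \<Sum>\<nu>2\<in>NR (n - Suc k). G (comb k \<nu>1 \<nu>2)) =
     (\<Sum>k<length w. \<Sum>r\<in>states A. \<Sum>s\<in>states A. \<Sum>t\<in>states A.
        dcall A p a r * Wp A r s (take k w) * dret A s p (w ! k) t * Wp A t q (drop (Suc k) w))"
  proof (rule sum.cong)
    show "{..<n} = {..<length w}" by (simp add: n_def)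
  next
    fix k assume "k \<in> {..<length w}"
    then have kn: "k < n" by (simp add: n_def)
    define m where "m = n - Suc k"
    define u where "u = take k w"
    define v where "v = drop (Suc k) w"
    have lu: "length u = k" and lv: "length v = m" using kn by (auto simp: u_def v_def m_def n_def)
    have wd: "w = u @ w ! k # v" unfolding u_def v_def using kn by (simp add: n_def id_take_nth_drop)
    have sn: "Suc n = Suc (Suc (k + m))" using kn by (simp add: m_def)
    have "(\<Sum>\<nu>1\<in>NR k. \<Sum>\<nu>2\<in>NR m. G (comb k \<nu>1 \<nu>2)) =
      (\<Sum>\<nu>1\<in>NR k. \<Sum>\<nu>2\<in>NR m. \<Sum>r\<in>states A. \<Sum>s\<in>states A. \<Sum>t\<in>states A. dcall A p a r *
        (\<Sum>qs1\<in>runs A k. if qs1 ! 0 = r \<and> qs1 ! k = s then Wt A u \<nu>1 qs1 else 0) * dret A s p (w ! k) t *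
        (\<Sum>qs2\<in>runs A m. if qs2 ! 0 = t \<and> qs2 ! m = q then Wt A v \<nu>2 qs2 else 0))"
    proof (intro sum.cong refl)
      fix \<nu>1 \<nu>2 assume "\<nu>1 \<in> NR k" "\<nu>2 \<in> NR m"
      from GB[OF fin p this lu lv, of q a "w ! k"]
      show "G (comb k \<nu>1 \<nu>2) = (\<Sum>r\<in>states A. \<Sum>s\<in>states A. \<Sum>t\<in>states A. dcall A p a r *
        (\<Sum>qs1\<in>runs A k. if qs1 ! 0 = r \<and> qs1 ! k = s then Wt A u \<nu>1 qs1 else 0) * dret A s p (w ! k) t *
        (\<Sum>qs2\<in>runs A m. if qs2 ! 0 = t \<and> qs2 ! m = q then Wt A v \<nu>2 qs2 else 0))"
        unfolding G_def sn by (subst wd) simp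
    qed
    also have "\<dots> = (\<Sum>r\<in>states A. \<Sum>s\<in>states A. \<Sum>t\<in>states A.
        dcall A p a r * Wp A r s u * dret A s p (w ! k) t * Wp A t q v)"
      unfolding swap5 Wp_def lu lv ..
    finally show "(\<Sum>\<nu>1\<in>NR k. \<Sum>\<nu>2\<in>NR (n - Suc k). G (comb k \<nu>1 \<nu>2)) =
     (\<Sum>r\<in>states A. \<Sum>s\<in>states A. \<Sum>t\<in>states A.
        dcall A p a r * Wp A r s (take k w) * dret A s p (w ! k) t * Wp A t q (drop (Suc k) w))"
      unfolding m_def u_def v_def .
  qed
  finally show ?thesis .
qed

lemma NR_0: "NR 0 = {{}}"
  unfolding NR_def nesting_rel_def by auto

lemma Wp_nil:
  fixes A :: "('a, 'k::comm_semiring_1) wnwa"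
  assumes fin: "finite (states A)" and p: "p \<in> states A" and q: "q \<in> states A"
  shows "Wp A p q [] = (if p = q then 1 else 0)"
proof -
  have "Wp A p q [] = (\<Sum>qs\<in>runs A 0. if qs ! 0 = p \<and> qs ! 0 = q then 1 else (0::'k))"
    by (simp add: Wp_def NR_0 Wt_def cong: if_cong)
  also have "\<dots> = (\<Sum>r\<in>states A. if r = p \<and> r = q then 1 else 0)"
  proof -
    have R: "runs A 0 = (\<lambda>r. [r]) ` states A"
      unfolding runs_def by (auto simp: length_Suc_conv)
    show ?thesis unfolding R by (simp add: sum.reindex inj_on_def)
  qed
  also have "\<dots> = (\<Sum>r\<in>states A. if p = r then (if p = q then 1 else 0) else 0)"
    by (rule sum.cong) auto
  also have "\<dots> = (if p = q then 1 else 0)" using fin p by simp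
  finally show ?thesis .
qed
section \<open>Evaluation of monomials\<close>

abbreviation eps :: "'a list \<Rightarrow> 'k::comm_semiring_1" where "eps \<equiv> char_series []"

lemma eval1: "eval_mon S [Inl a] = cauchy_prod (char_series [a]) eps"
  by simp
lemma eval2: "eval_mon S [Inl a, Inr X] = cauchy_prod (char_series [a]) (S X)"
  by (simp add: cp_eps_right)
lemma eval3: "eval_mon S [Inl a, Inl b] = cauchy_prod (char_series [a]) (cauchy_prod eps (cauchy_prod (char_series [b]) eps))"
  by (simp add: cp_eps_left)
lemma eval4: "eval_mon S [Inl a, Inr X, Inl b] = cauchy_prod (char_series [a]) (cauchy_prod (S X) (cauchy_prod (char_series [b]) eps))"
  by simp
lemma eval5: "eval_mon S [Inl a, Inl b, Inr Y] = cauchy_prod (char_series [a]) (cauchy_prod eps (cauchy_prod (char_series [b]) (S Y)))"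
  by (simp add: cp_eps_left cp_eps_right)
lemma eval6: "eval_mon S [Inl a, Inr X, Inl b, Inr Y] = cauchy_prod (char_series [a]) (cauchy_prod (S X) (cauchy_prod (char_series [b]) (S Y)))"
  by (simp add: cp_eps_right)

lemma cp_char_nil: "cauchy_prod (char_series [a]) T [] = 0"
  by (simp add: cp_char_cons)

lemma if_conj_distrib_helper: "(if P then (if Q then x else 0) else 0) = (if Q \<and> P then x else (0::'k::zero))"
  by simp

lemma ite_mult0: "c * (if P then Y else 0) = (if P then c * Y else (0::'k::comm_semiring_1))"
  by simp

lemma swap_out4: "(\<Sum>a\<in>A. \<Sum>b\<in>B. \<Sum>c\<in>C. \<Sum>d\<in>D. \<Sum>k\<in>E. f a b c d k) =
   (\<Sum>k\<in>E. \<Sum>a\<in>A. \<Sum>b\<in>B. \<Sum>c\<in>C. \<Sum>d\<in>D. (f a b c d k :: 'k::comm_monoid_add))"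
proof -
  have "(\<Sum>a\<in>A. \<Sum>b\<in>B. \<Sum>c\<in>C. \<Sum>d\<in>D. \<Sum>k\<in>E. f a b c d k) = (\<Sum>a\<in>A. \<Sum>b\<in>B. \<Sum>c\<in>C. \<Sum>k\<in>E. \<Sum>d\<in>D. f a b c d k)"
    by (intro sum.cong refl) (rule sum.swap)
  also have "\<dots> = (\<Sum>a\<in>A. \<Sum>b\<in>B. \<Sum>k\<in>E. \<Sum>c\<in>C. \<Sum>d\<in>D. f a b c d k)"
    by (intro sum.cong refl) (rule sum.swap)
  also have "\<dots> = (\<Sum>a\<in>A. \<Sum>k\<in>E. \<Sum>b\<in>B. \<Sum>c\<in>C. \<Sum>d\<in>D. f a b c d k)"
    by (intro sum.cong refl) (rule sum.swap)
  also have "\<dots> = (\<Sum>k\<in>E. \<Sum>a\<in>A. \<Sum>b\<in>B. \<Sum>c\<in>C. \<Sum>d\<in>D. f a b c d k)"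
    by (rule sum.swap)
  finally show ?thesis .
qed

lemma swap_in3: "(\<Sum>b\<in>B. \<Sum>r\<in>C. \<Sum>s\<in>D. \<Sum>t\<in>E. f b r s t) =
   (\<Sum>r\<in>C. \<Sum>s\<in>D. \<Sum>t\<in>E. \<Sum>b\<in>B. (f b r s t :: 'k::comm_monoid_add))"
proof -
  have "(\<Sum>b\<in>B. \<Sum>r\<in>C. \<Sum>s\<in>D. \<Sum>t\<in>E. f b r s t) = (\<Sum>r\<in>C. \<Sum>b\<in>B. \<Sum>s\<in>D. \<Sum>t\<in>E. f b r s t)"
    by (rule sum.swap)
  also have "\<dots> = (\<Sum>r\<in>C. \<Sum>s\<in>D. \<Sum>b\<in>B. \<Sum>t\<in>E. f b r s t)"
    by (intro sum.cong refl) (rule sum.swap)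
  also have "\<dots> = (\<Sum>r\<in>C. \<Sum>s\<in>D. \<Sum>t\<in>E. \<Sum>b\<in>B. f b r s t)"
    by (intro sum.cong refl) (rule sum.swap)
  finally show ?thesis .
qed

lemma prodsum: "(\<Sum>i\<in>A \<times> B. f i) = (\<Sum>a\<in>A. \<Sum>b\<in>B. f (a, b))"
  by (simp add: sum.cartesian_product)

lemma fam_lemma:
  fixes F :: "nat \<Rightarrow> nat \<Rightarrow> 'a::finite list \<Rightarrow> 'k::comm_semiring_1" and G :: "nat \<Rightarrow> 'a list \<Rightarrow> 'k"
  assumes fin: "finite Q"
  shows "(\<Sum>i\<in>(UNIV::'a set) \<times> (UNIV::'a set) \<times> Q \<times> Q \<times> Q. (case i of (a, b, r, s, t) \<Rightarrow>
      K r s t * dc a r * dr s b t * cauchy_prod (char_series [a]) (cauchy_prod (F r s) (cauchy_prod (char_series [b]) (G t))) (x # w))) =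
    (\<Sum>k<length w. \<Sum>r\<in>Q. \<Sum>s\<in>Q. \<Sum>t\<in>Q. K r s t * dc x r * F r s (take k w) * dr s (w ! k) t * G t (drop (Suc k) w))"
proof -
  define Z where "Z b r s t = K r s t * dc x r * dr s b t *
      (\<Sum>k<length w. if w ! k = b then F r s (take k w) * G t (drop (Suc k) w) else 0)" for b r s t
  have "(\<Sum>i\<in>(UNIV::'a set) \<times> (UNIV::'a set) \<times> Q \<times> Q \<times> Q. (case i of (a, b, r, s, t) \<Rightarrow>
      K r s t * dc a r * dr s b t * cauchy_prod (char_series [a]) (cauchy_prod (F r s) (cauchy_prod (char_series [b]) (G t))) (x # w))) =
    (\<Sum>a\<in>UNIV. \<Sum>b\<in>UNIV. \<Sum>r\<in>Q. \<Sum>s\<in>Q. \<Sum>t\<in>Q. if x = a then Z b r s t else 0)"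
    unfolding prodsum by (intro sum.cong refl) (auto simp: cp_G4 Z_def)
  also have "\<dots> = (\<Sum>a\<in>UNIV. if x = a then (\<Sum>b\<in>UNIV. \<Sum>r\<in>Q. \<Sum>s\<in>Q. \<Sum>t\<in>Q. Z b r s t) else 0)"
    by (intro sum.cong refl) auto
  also have "\<dots> = (\<Sum>b\<in>UNIV. \<Sum>r\<in>Q. \<Sum>s\<in>Q. \<Sum>t\<in>Q. Z b r s t)"
    by simp
  also have "\<dots> = (\<Sum>b\<in>UNIV. \<Sum>r\<in>Q. \<Sum>s\<in>Q. \<Sum>t\<in>Q. \<Sum>k<length w.
      if w ! k = b then K r s t * dc x r * F r s (take k w) * dr s b t * G t (drop (Suc k) w) else 0)"
    unfolding Z_def sum_distrib_left by (intro sum.cong refl) (simp add: ac_simps)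
  also have "\<dots> = (\<Sum>k<length w. \<Sum>b\<in>UNIV. \<Sum>r\<in>Q. \<Sum>s\<in>Q. \<Sum>t\<in>Q.
      if w ! k = b then K r s t * dc x r * F r s (take k w) * dr s b t * G t (drop (Suc k) w) else 0)"
    by (rule swap_out4)
  also have "\<dots> = (\<Sum>k<length w. \<Sum>r\<in>Q. \<Sum>s\<in>Q. \<Sum>t\<in>Q. \<Sum>b\<in>UNIV.
      if w ! k = b then K r s t * dc x r * F r s (take k w) * dr s b t * G t (drop (Suc k) w) else 0)"
    by (intro sum.cong refl) (rule swap_in3)
  also have "\<dots> = (\<Sum>k<length w. \<Sum>r\<in>Q. \<Sum>s\<in>Q. \<Sum>t\<in>Q. K r s t * dc x r * F r s (take k w) * dr s (w ! k) t * G t (drop (Suc k) w))"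
    by simp
  finally show ?thesis .
qed

lemma fam_nil:
  "(\<Sum>i\<in>(UNIV::'a::finite set) \<times> (UNIV::'a set) \<times> Q \<times> Q \<times> Q. (case i of (a, b, r, s, t) \<Rightarrow>
      K r s t * dc a r * dr s b t * cauchy_prod (char_series [a]) (T r s t b) [])) = (0::'k::comm_semiring_1)"
  by (simp add: cp_char_nil split_def)

lemma int_lemma:
  fixes H :: "nat \<Rightarrow> 'a::finite list \<Rightarrow> 'k::comm_semiring_1"
  shows "(\<Sum>i\<in>(UNIV::'a set) \<times> Q. (case i of (a, r) \<Rightarrow> K r * di a r * cauchy_prod (char_series [a]) (H r) (x # w))) =
    (\<Sum>r\<in>Q. K r * di x r * H r w)"
proof -
  have "(\<Sum>i\<in>(UNIV::'a set) \<times> Q. (case i of (a, r) \<Rightarrow> K r * di a r * cauchy_prod (char_series [a]) (H r) (x # w))) =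
    (\<Sum>a\<in>UNIV. \<Sum>r\<in>Q. if x = a then K r * di a r * H r w else 0)"
    unfolding prodsum by (intro sum.cong refl) (auto simp: cp_char_cons)
  also have "\<dots> = (\<Sum>a\<in>UNIV. if x = a then (\<Sum>r\<in>Q. K r * di a r * H r w) else 0)"
    by (intro sum.cong refl) auto
  also have "\<dots> = (\<Sum>r\<in>Q. K r * di x r * H r w)" by simp
  finally show ?thesis .
qed

lemma int_nil:
  "(\<Sum>i\<in>(UNIV::'a::finite set) \<times> Q. (case i of (a, r) \<Rightarrow> K r * di a r * cauchy_prod (char_series [a]) (H r) [])) = (0::'k::comm_semiring_1)"
  by (simp add: cp_char_nil split_def)

section \<open>The algebraic system\<close>

definition poly_of :: "'i set \<Rightarrow> ('i \<Rightarrow> 'k::comm_semiring_1) \<Rightarrow> ('i \<Rightarrow> ('a + nat) list) \<Rightarrow> ('a + nat) list \<Rightarrow> 'k" where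
  "poly_of R c \<mu> m = (\<Sum>i\<in>R. if \<mu> i = m then c i else 0)"

lemma poly_of_sum:
  assumes "finite R" "finite M" "\<mu> ` R \<subseteq> M"
  shows "(\<Sum>m\<in>M. poly_of R c \<mu> m * E m) = (\<Sum>i\<in>R. c i * E (\<mu> i))"
proof -
  have "(\<Sum>m\<in>M. poly_of R c \<mu> m * E m) = (\<Sum>m\<in>M. \<Sum>i\<in>R. if \<mu> i = m then c i * E m else 0)"
    unfolding poly_of_def sum_distrib_right by (intro sum.cong refl) auto
  also have "\<dots> = (\<Sum>i\<in>R. \<Sum>m\<in>M. if \<mu> i = m then c i * E m else 0)"
    by (rule sum.swap)
  also have "\<dots> = (\<Sum>i\<in>R. c i * E (\<mu> i))"
    using assms by (intro sum.cong refl) auto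
  finally show ?thesis .
qed

lemma poly_of_nz:
  assumes "poly_of R c \<mu> m \<noteq> 0"
  shows "m \<in> \<mu> ` R"
proof (rule ccontr)
  assume "m \<notin> \<mu> ` R"
  then have "poly_of R c \<mu> m = 0" unfolding poly_of_def by (intro sum.neutral) auto
  with assms show False by simp
qed

definition enc :: "nat \<Rightarrow> nat \<Rightarrow> nat" where
  "enc r s = Suc (prod_encode (r, s))"

definition Wne :: "('a, 'k::comm_semiring_1) wnwa \<Rightarrow> nat \<Rightarrow> nat \<Rightarrow> 'a list \<Rightarrow> 'k" where
  "Wne A r s w = (if w = [] then 0 else Wp A r s w)"

definition SolF :: "('a nested_word \<Rightarrow> 'k::comm_semiring_1) \<Rightarrow> ('a, 'k) wnwa \<Rightarrow> nat \<Rightarrow> 'a list \<Rightarrow> 'k" where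
  "SolF S A X w = (if X = 0 then proj S w else (case prod_decode (X - 1) of (r, s) \<Rightarrow> Wne A r s w))"

lemma SolF_enc: "SolF S A (enc r s) = Wne A r s"
  by (simp add: SolF_def enc_def fun_eq_iff)

definition Ppq :: "('a, 'k::comm_semiring_1) wnwa \<Rightarrow> nat \<Rightarrow> nat \<Rightarrow> ('a + nat) list \<Rightarrow> 'k" where
  "Ppq A p q m =
     poly_of (UNIV \<times> states A) (\<lambda>(a, r). (if r = q then 1 else 0) * dint A p a r) (\<lambda>(a, r). [Inl a]) m +
     poly_of (UNIV \<times> states A) (\<lambda>(a, r). 1 * dint A p a r) (\<lambda>(a, r). [Inl a, Inr (enc r q)]) m +
     poly_of (UNIV \<times> UNIV \<times> states A \<times> states A \<times> states A)
       (\<lambda>(a, b, r, s, t). ((if r = s then 1 else 0) * (if t = q then 1 else 0)) * dcall A p a r * dret A s p b t)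
       (\<lambda>(a, b, r, s, t). [Inl a, Inl b]) m +
     poly_of (UNIV \<times> UNIV \<times> states A \<times> states A \<times> states A)
       (\<lambda>(a, b, r, s, t). (if t = q then 1 else 0) * dcall A p a r * dret A s p b t)
       (\<lambda>(a, b, r, s, t). [Inl a, Inr (enc r s), Inl b]) m +
     poly_of (UNIV \<times> UNIV \<times> states A \<times> states A \<times> states A)
       (\<lambda>(a, b, r, s, t). (if r = s then 1 else 0) * dcall A p a r * dret A s p b t)
       (\<lambda>(a, b, r, s, t). [Inl a, Inl b, Inr (enc t q)]) m +
     poly_of (UNIV \<times> UNIV \<times> states A \<times> states A \<times> states A)
       (\<lambda>(a, b, r, s, t). 1 * dcall A p a r * dret A s p b t)
       (\<lambda>(a, b, r, s, t). [Inl a, Inr (enc r s), Inl b, Inr (enc t q)]) m"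

definition PF :: "('a, 'k::comm_semiring_1) wnwa \<Rightarrow> nat \<Rightarrow> ('a + nat) list \<Rightarrow> 'k" where
  "PF A X m = (if X = 0 then (\<Sum>p\<in>states A. \<Sum>q\<in>states A. init A p * final A q * Ppq A p q m)
     else (case prod_decode (X - 1) of (p, q) \<Rightarrow> Ppq A p q m))"

lemma PF_enc: "PF A (enc p q) = Ppq A p q"
  by (simp add: PF_def enc_def fun_eq_iff)

definition VS :: "('a, 'k) wnwa \<Rightarrow> nat set" where
  "VS A = insert 0 ((\<lambda>(r, s). enc r s) ` (states A \<times> states A))"

definition Mset :: "('a, 'k) wnwa \<Rightarrow> ('a + nat) list set" where
  "Mset A = {m. set m \<subseteq> range Inl \<union> Inr ` VS A \<and> length m \<le> 4}"

lemma enc_VS: "r \<in> states A \<Longrightarrow> s \<in> states A \<Longrightarrow> enc r s \<in> VS A"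
  unfolding VS_def by auto

lemma finite_VS: "finite (states A) \<Longrightarrow> finite (VS A)"
  unfolding VS_def by simp

lemma finite_Mset:
  assumes "finite (states A)"
  shows "finite (Mset (A :: ('a::finite, 'k) wnwa))"
proof -
  have "finite (range Inl \<union> Inr ` VS A :: ('a + nat) set)" using finite_VS[OF assms] by simp
  from finite_lists_length_le[OF this, of 4] show ?thesis unfolding Mset_def .
qed

lemma img_Mset:
  assumes q: "q \<in> states A"
  shows "(\<lambda>(a, r). [Inl a]) ` (UNIV \<times> states A) \<subseteq> Mset A"
    "(\<lambda>(a, r). [Inl a, Inr (enc r q)]) ` (UNIV \<times> states A) \<subseteq> Mset A"
    "(\<lambda>(a, b, r, s, t). [Inl a, Inl b]) ` (UNIV \<times> UNIV \<times> states A \<times> states A \<times> states A) \<subseteq> Mset A"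
    "(\<lambda>(a, b, r, s, t). [Inl a, Inr (enc r s), Inl b]) ` (UNIV \<times> UNIV \<times> states A \<times> states A \<times> states A) \<subseteq> Mset A"
    "(\<lambda>(a, b, r, s, t). [Inl a, Inl b, Inr (enc t q)]) ` (UNIV \<times> UNIV \<times> states A \<times> states A \<times> states A) \<subseteq> Mset A"
    "(\<lambda>(a, b, r, s, t). [Inl a, Inr (enc r s), Inl b, Inr (enc t q)]) ` (UNIV \<times> UNIV \<times> states A \<times> states A \<times> states A) \<subseteq> Mset A"
  using q by (auto simp: Mset_def enc_VS)

lemma poly_of_Mset:
  assumes "poly_of R c \<mu> m \<noteq> 0" "\<mu> ` R \<subseteq> M"
  shows "m \<in> M"
  using subsetD[OF assms(2) poly_of_nz[OF assms(1)]] .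

lemma Ppq_supp:
  assumes "p \<in> states A" "q \<in> states A" "Ppq A p q m \<noteq> 0"
  shows "m \<in> Mset A"
proof (rule ccontr)
  assume nm: "m \<notin> Mset A"
  note im = img_Mset[OF assms(2)]
  have z: "poly_of R c \<mu> m = 0" if "\<mu> ` R \<subseteq> Mset A" for R c and \<mu> :: "_ \<Rightarrow> ('a + nat) list"
  proof -
    have "m \<notin> \<mu> ` R" using nm that by auto
    then show ?thesis using poly_of_nz[of R c \<mu> m] by auto
  qed
  have "Ppq A p q m = 0"
    unfolding Ppq_def by (simp only: z[OF im(1)] z[OF im(2)] z[OF im(3)] z[OF im(4)] z[OF im(5)] z[OF im(6)] add_0)
  with assms(3) show False by simp
qed

lemma Ppq_nil: "Ppq A p q [] = 0"
  unfolding Ppq_def poly_of_def by (simp add: split_def)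

lemma Ppq_var: "Ppq A p q [Inr Y] = 0"
  unfolding Ppq_def poly_of_def by (simp add: split_def)

lemma Wp_dec:
  assumes fin: "finite (states A)" and r: "r \<in> states A" and s: "s \<in> states A"
  shows "Wp A r s u = (if r = s then 1 else 0) * eps u + Wne A r s u"
proof (cases "u = []")
  case True
  then show ?thesis using Wp_nil[OF fin r s] by (simp add: Wne_def char_series_def)
next
  case False
  then show ?thesis by (simp add: Wne_def char_series_def)
qed

lemma key:
  fixes A :: "('a::finite, 'k::comm_semiring_1) wnwa"
  assumes fin: "finite (states A)" and p: "p \<in> states A" and q: "q \<in> states A"
  shows "Wne A p q w = (\<Sum>m\<in>Mset A. Ppq A p q m * eval_mon (SolF S A) m w)"
proof -
  let ?E = "eval_mon (SolF S A)"
  let ?Q = "states A"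
  let ?R2 = "(UNIV::'a set) \<times> ?Q" and ?R5 = "(UNIV::'a set) \<times> (UNIV::'a set) \<times> ?Q \<times> ?Q \<times> ?Q"
  have fM: "finite (Mset A)" by (rule finite_Mset[OF fin])
  have f2: "finite ?R2" and f5: "finite ?R5" using fin by auto
  note im = img_Mset[OF q]
  have "(\<Sum>m\<in>Mset A. Ppq A p q m * ?E m w) =
     (\<Sum>i\<in>?R2. (\<lambda>(a, r). (if r = q then 1 else 0) * dint A p a r) i * ?E ((\<lambda>(a, r). [Inl a]) i) w) +
     (\<Sum>i\<in>?R2. (\<lambda>(a, r). 1 * dint A p a r) i * ?E ((\<lambda>(a, r). [Inl a, Inr (enc r q)]) i) w) +
     (\<Sum>i\<in>?R5. (\<lambda>(a, b, r, s, t). ((if r = s then 1 else 0) * (if t = q then 1 else 0)) * dcall A p a r * dret A s p b t) i *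
        ?E ((\<lambda>(a, b, r, s, t). [Inl a, Inl b]) i) w) +
     (\<Sum>i\<in>?R5. (\<lambda>(a, b, r, s, t). (if t = q then 1 else 0) * dcall A p a r * dret A s p b t) i *
        ?E ((\<lambda>(a, b, r, s, t). [Inl a, Inr (enc r s), Inl b]) i) w) +
     (\<Sum>i\<in>?R5. (\<lambda>(a, b, r, s, t). (if r = s then 1 else 0) * dcall A p a r * dret A s p b t) i *
        ?E ((\<lambda>(a, b, r, s, t). [Inl a, Inl b, Inr (enc t q)]) i) w) +
     (\<Sum>i\<in>?R5. (\<lambda>(a, b, r, s, t). 1 * dcall A p a r * dret A s p b t) i *
        ?E ((\<lambda>(a, b, r, s, t). [Inl a, Inr (enc r s), Inl b, Inr (enc t q)]) i) w)"
    unfolding Ppq_def distrib_right sum.distrib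
    by (simp only: poly_of_sum[OF f2 fM im(1)] poly_of_sum[OF f2 fM im(2)] poly_of_sum[OF f5 fM im(3)]
        poly_of_sum[OF f5 fM im(4)] poly_of_sum[OF f5 fM im(5)] poly_of_sum[OF f5 fM im(6)])
  also have "\<dots> = Wne A p q w"
  proof (cases w)
    case Nil
    then show ?thesis
      by (simp add: split_def eval1 eval2 eval3 eval4 eval5 eval6 cp_char_nil Wne_def)
  next
    case (Cons x w')
    let ?N = "Wne A"
    have e1: "(\<Sum>i\<in>?R2. (\<lambda>(a, r). (if r = q then 1 else 0) * dint A p a r) i * ?E ((\<lambda>(a, r). [Inl a]) i) w) =
        (\<Sum>r\<in>?Q. (if r = q then 1 else 0) * dint A p x r * eps w')"
      unfolding Cons
      by (rule trans[OF _ int_lemma[where K="\<lambda>r. if r = q then 1 else 0" and di="dint A p" and H="\<lambda>r. eps"]])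
        (intro sum.cong refl, clarsimp simp: eval1)
    have e2: "(\<Sum>i\<in>?R2. (\<lambda>(a, r). 1 * dint A p a r) i * ?E ((\<lambda>(a, r). [Inl a, Inr (enc r q)]) i) w) =
        (\<Sum>r\<in>?Q. 1 * dint A p x r * ?N r q w')"
      unfolding Cons
      by (rule trans[OF _ int_lemma[where K="\<lambda>r. 1" and di="dint A p" and H="\<lambda>r. ?N r q"]])
        (intro sum.cong refl, clarsimp simp: eval2 SolF_enc cp_eps_right)
    have e3: "(\<Sum>i\<in>?R5. (\<lambda>(a, b, r, s, t). ((if r = s then 1 else 0) * (if t = q then 1 else 0)) * dcall A p a r * dret A s p b t) i *
        ?E ((\<lambda>(a, b, r, s, t). [Inl a, Inl b]) i) w) =
      (\<Sum>k<length w'. \<Sum>r\<in>?Q. \<Sum>s\<in>?Q. \<Sum>t\<in>?Q. ((if r = s then 1 else 0) * (if t = q then 1 else 0)) *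
         dcall A p x r * eps (take k w') * dret A s p (w' ! k) t * eps (drop (Suc k) w'))"
      unfolding Cons
      by (rule trans[OF _ fam_lemma[OF fin, where K="\<lambda>r s t. (if r = s then 1 else 0) * (if t = q then 1 else 0)"
            and dc="dcall A p" and dr="\<lambda>s b t. dret A s p b t" and F="\<lambda>r s. eps" and G="\<lambda>t. eps"]])
        (intro sum.cong refl, clarsimp simp: eval3 cp_eps_left cp_eps_right)
    have e4: "(\<Sum>i\<in>?R5. (\<lambda>(a, b, r, s, t). (if t = q then 1 else 0) * dcall A p a r * dret A s p b t) i *
        ?E ((\<lambda>(a, b, r, s, t). [Inl a, Inr (enc r s), Inl b]) i) w) =
      (\<Sum>k<length w'. \<Sum>r\<in>?Q. \<Sum>s\<in>?Q. \<Sum>t\<in>?Q. (if t = q then 1 else 0) *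
         dcall A p x r * ?N r s (take k w') * dret A s p (w' ! k) t * eps (drop (Suc k) w'))"
      unfolding Cons
      by (rule trans[OF _ fam_lemma[OF fin, where K="\<lambda>r s t. (if t = q then 1 else 0)"
            and dc="dcall A p" and dr="\<lambda>s b t. dret A s p b t" and F="\<lambda>r s. ?N r s" and G="\<lambda>t. eps"]])
        (intro sum.cong refl, clarsimp simp: eval4 SolF_enc cp_eps_left cp_eps_right)
    have e5: "(\<Sum>i\<in>?R5. (\<lambda>(a, b, r, s, t). (if r = s then 1 else 0) * dcall A p a r * dret A s p b t) i *
        ?E ((\<lambda>(a, b, r, s, t). [Inl a, Inl b, Inr (enc t q)]) i) w) =
      (\<Sum>k<length w'. \<Sum>r\<in>?Q. \<Sum>s\<in>?Q. \<Sum>t\<in>?Q. (if r = s then 1 else 0) *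
         dcall A p x r * eps (take k w') * dret A s p (w' ! k) t * ?N t q (drop (Suc k) w'))"
      unfolding Cons
      by (rule trans[OF _ fam_lemma[OF fin, where K="\<lambda>r s t. (if r = s then 1 else 0)"
            and dc="dcall A p" and dr="\<lambda>s b t. dret A s p b t" and F="\<lambda>r s. eps" and G="\<lambda>t. ?N t q"]])
        (intro sum.cong refl, clarsimp simp: eval5 SolF_enc cp_eps_left cp_eps_right)
    have e6: "(\<Sum>i\<in>?R5. (\<lambda>(a, b, r, s, t). 1 * dcall A p a r * dret A s p b t) i *
        ?E ((\<lambda>(a, b, r, s, t). [Inl a, Inr (enc r s), Inl b, Inr (enc t q)]) i) w) =
      (\<Sum>k<length w'. \<Sum>r\<in>?Q. \<Sum>s\<in>?Q. \<Sum>t\<in>?Q. 1 *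
         dcall A p x r * ?N r s (take k w') * dret A s p (w' ! k) t * ?N t q (drop (Suc k) w'))"
      unfolding Cons
      by (rule trans[OF _ fam_lemma[OF fin, where K="\<lambda>r s t. 1"
            and dc="dcall A p" and dr="\<lambda>s b t. dret A s p b t" and F="\<lambda>r s. ?N r s" and G="\<lambda>t. ?N t q"]])
        (intro sum.cong refl, clarsimp simp: eval6 SolF_enc cp_eps_left cp_eps_right)
    have lhs: "Wne A p q w = (\<Sum>r\<in>?Q. dint A p x r * Wp A r q w') +
      (\<Sum>k<length w'. \<Sum>r\<in>?Q. \<Sum>s\<in>?Q. \<Sum>t\<in>?Q.
        dcall A p x r * Wp A r s (take k w') * dret A s p (w' ! k) t * Wp A t q (drop (Suc k) w'))"
      unfolding Cons Wne_def using Wp_cons[OF fin p] by simp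
    have i1: "(\<Sum>r\<in>?Q. dint A p x r * Wp A r q w') =
       (\<Sum>r\<in>?Q. (if r = q then 1 else 0) * dint A p x r * eps w') + (\<Sum>r\<in>?Q. 1 * dint A p x r * ?N r q w')"
      unfolding sum.distrib[symmetric]
      by (intro sum.cong refl) (simp add: Wp_dec[OF fin _ q] algebra_simps)
    have c1: "(\<Sum>k<length w'. \<Sum>r\<in>?Q. \<Sum>s\<in>?Q. \<Sum>t\<in>?Q.
        dcall A p x r * Wp A r s (take k w') * dret A s p (w' ! k) t * Wp A t q (drop (Suc k) w')) =
      (\<Sum>k<length w'. \<Sum>r\<in>?Q. \<Sum>s\<in>?Q. \<Sum>t\<in>?Q. ((if r = s then 1 else 0) * (if t = q then 1 else 0)) *
         dcall A p x r * eps (take k w') * dret A s p (w' ! k) t * eps (drop (Suc k) w')) +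
      (\<Sum>k<length w'. \<Sum>r\<in>?Q. \<Sum>s\<in>?Q. \<Sum>t\<in>?Q. (if t = q then 1 else 0) *
         dcall A p x r * ?N r s (take k w') * dret A s p (w' ! k) t * eps (drop (Suc k) w')) +
      (\<Sum>k<length w'. \<Sum>r\<in>?Q. \<Sum>s\<in>?Q. \<Sum>t\<in>?Q. (if r = s then 1 else 0) *
         dcall A p x r * eps (take k w') * dret A s p (w' ! k) t * ?N t q (drop (Suc k) w')) +
      (\<Sum>k<length w'. \<Sum>r\<in>?Q. \<Sum>s\<in>?Q. \<Sum>t\<in>?Q. 1 *
         dcall A p x r * ?N r s (take k w') * dret A s p (w' ! k) t * ?N t q (drop (Suc k) w'))"
      unfolding sum.distrib[symmetric]
      by (intro sum.cong refl) (simp add: Wp_dec[OF fin] q algebra_simps)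
    show ?thesis
      unfolding e1 e2 e3 e4 e5 e6 lhs i1 c1 by (simp add: ac_simps)
  qed
  finally show ?thesis by simp
qed

lemma PROJ:
  assumes fin: "finite (states A)" and SA: "\<forall>nw\<in>NW. S nw = behaviour A nw"
  shows "proj S w = (\<Sum>p\<in>states A. \<Sum>q\<in>states A. init A p * final A q * Wne A p q w)"
proof (cases "w = []")
  case True
  then show ?thesis by (simp add: proj_def Wne_def)
next
  case False
  define n where "n = length w"
  let ?Q = "states A"
  have "proj S w = (\<Sum>\<nu>\<in>NR n. \<Sum>qs\<in>runs A n. init A (qs ! 0) * (Wt A w \<nu> qs * final A (qs ! n)))"
  proof -
    have "proj S w = (\<Sum>\<nu>\<in>NR n. S (w, \<nu>))" using False by (simp add: proj_def NR_def n_def)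
    also have "\<dots> = (\<Sum>\<nu>\<in>NR n. behaviour A (w, \<nu>))"
      using SA False by (intro sum.cong refl) (auto simp: NW_def NR_def n_def)
    also have "\<dots> = (\<Sum>\<nu>\<in>NR n. \<Sum>qs\<in>runs A n. init A (qs ! 0) * (Wt A w \<nu> qs * final A (qs ! n)))"
      by (simp add: behaviour_def Wt_def n_def mult.assoc)
    finally show ?thesis .
  qed
  also have "\<dots> = (\<Sum>\<nu>\<in>NR n. \<Sum>p\<in>?Q. \<Sum>q\<in>?Q. init A p * final A q *
      (\<Sum>qs\<in>runs A n. if qs ! 0 = p \<and> qs ! n = q then Wt A w \<nu> qs else 0))"
  proof (intro sum.cong refl)
    fix \<nu>
    have "(\<Sum>qs\<in>runs A n. init A (qs ! 0) * (Wt A w \<nu> qs * final A (qs ! n))) =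
      (\<Sum>p\<in>?Q. init A p * (\<Sum>qs\<in>runs A n. if qs ! 0 = p then Wt A w \<nu> qs * final A (qs ! n) else 0))"
      by (rule sum_pick[OF fin]) (simp add: run_nth_in)
    also have "\<dots> = (\<Sum>p\<in>?Q. init A p * (\<Sum>q\<in>?Q. final A q *
        (\<Sum>qs\<in>runs A n. if qs ! n = q then (if qs ! 0 = p then Wt A w \<nu> qs else 0) else 0)))"
    proof (intro sum.cong refl arg_cong2[where f="(*)"])
      fix p
      have "(\<Sum>qs\<in>runs A n. if qs ! 0 = p then Wt A w \<nu> qs * final A (qs ! n) else 0) =
         (\<Sum>qs\<in>runs A n. final A (qs ! n) * (if qs ! 0 = p then Wt A w \<nu> qs else 0))"
        by (intro sum.cong refl) (simp add: mult.commute)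
      also have "\<dots> = (\<Sum>q\<in>?Q. final A q *
        (\<Sum>qs\<in>runs A n. if qs ! n = q then (if qs ! 0 = p then Wt A w \<nu> qs else 0) else 0))"
        by (rule sum_pick[OF fin]) (simp add: run_nth_in)
      finally show "(\<Sum>qs\<in>runs A n. if qs ! 0 = p then Wt A w \<nu> qs * final A (qs ! n) else 0) =
         (\<Sum>q\<in>?Q. final A q *
        (\<Sum>qs\<in>runs A n. if qs ! n = q then (if qs ! 0 = p then Wt A w \<nu> qs else 0) else 0))" .
    qed
    also have "\<dots> = (\<Sum>p\<in>?Q. \<Sum>q\<in>?Q. init A p * final A q *
      (\<Sum>qs\<in>runs A n. if qs ! 0 = p \<and> qs ! n = q then Wt A w \<nu> qs else 0))"
      by (simp add: sum_distrib_left mult.assoc if_conj_distrib_helper)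
    finally show "(\<Sum>qs\<in>runs A n. init A (qs ! 0) * (Wt A w \<nu> qs * final A (qs ! n))) =
      (\<Sum>p\<in>?Q. \<Sum>q\<in>?Q. init A p * final A q *
      (\<Sum>qs\<in>runs A n. if qs ! 0 = p \<and> qs ! n = q then Wt A w \<nu> qs else 0))" .
  qed
  also have "\<dots> = (\<Sum>p\<in>?Q. \<Sum>q\<in>?Q. init A p * final A q * Wp A p q w)"
    unfolding Wp_def n_def[symmetric] sum_distrib_left
    by (subst sum.swap, rule sum.cong[OF refl], subst sum.swap, rule refl)
  also have "\<dots> = (\<Sum>p\<in>?Q. \<Sum>q\<in>?Q. init A p * final A q * Wne A p q w)"
    using False by (simp add: Wne_def)
  finally show ?thesis .
qed


lemma VS_cases: "X \<in> VS A \<Longrightarrow> X = 0 \<or> (\<exists>p q. p \<in> states A \<and> q \<in> states A \<and> X = enc p q)"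
  unfolding VS_def by auto

lemma PF_supp:
  assumes "X \<in> VS A"
  shows "supp (PF A X) \<subseteq> Mset A"
proof
  fix m assume m: "m \<in> supp (PF A X)"
  from VS_cases[OF assms] show "m \<in> Mset A"
  proof
    assume X: "X = 0"
    from m have "(\<Sum>p\<in>states A. \<Sum>q\<in>states A. init A p * final A q * Ppq A p q m) \<noteq> 0"
      by (simp add: supp_def PF_def X)
    then obtain p where p: "p \<in> states A" "(\<Sum>q\<in>states A. init A p * final A q * Ppq A p q m) \<noteq> 0"
      by (meson sum.not_neutral_contains_not_neutral)
    then obtain q where q: "q \<in> states A" "init A p * final A q * Ppq A p q m \<noteq> 0"
      by (meson sum.not_neutral_contains_not_neutral)
    then have "Ppq A p q m \<noteq> 0" by auto
    with p q show ?thesis using Ppq_supp by blast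
  next
    assume "\<exists>p q. p \<in> states A \<and> q \<in> states A \<and> X = enc p q"
    then obtain p q where pq: "p \<in> states A" "q \<in> states A" "X = enc p q" by blast
    with m have "Ppq A p q m \<noteq> 0" by (simp add: supp_def PF_enc)
    with pq show ?thesis using Ppq_supp by blast
  qed
qed

lemma sum_supp_M:
  assumes "finite M" "supp P \<subseteq> M"
  shows "(\<Sum>m\<in>supp P. P m * E m) = (\<Sum>m\<in>M. P m * (E m :: 'k::comm_semiring_1))"
  by (rule sum.mono_neutral_left) (use assms in \<open>auto simp: supp_def\<close>)

theorem proposition6p3:
  fixes S :: "('a::finite) nested_word \<Rightarrow> 'k::comm_semiring_1"
  assumes "regular_nw S"
  shows "algebraic (proj S)"
proof -
  from assms obtain A where ok: "wnwa_ok A" and SA: "\<forall>nw\<in>NW. S nw = behaviour A nw"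
    unfolding regular_nw_def by blast
  have fin: "finite (states A)" using ok by (simp add: wnwa_ok_def)
  have fM: "finite (Mset A)" by (rule finite_Mset[OF fin])
  let ?V = "VS A" and ?P = "PF A" and ?Sol = "SolF S A"
  have polys: "\<forall>X\<in>?V. polynomial_over ?V (?P X)"
  proof
    fix X assume X: "X \<in> ?V"
    have sM: "supp (?P X) \<subseteq> Mset A" by (rule PF_supp[OF X])
    show "polynomial_over ?V (?P X)"
      unfolding polynomial_over_def
    proof
      show "finite (supp (?P X))" using sM fM by (rule finite_subset)
      show "\<forall>m\<in>supp (?P X). \<forall>Y. Inr Y \<in> set m \<longrightarrow> Y \<in> ?V"
        using sM by (auto simp: Mset_def)
    qed
  qed
  have proper: "proper_system ?V ?P"
    unfolding proper_system_def
  proof (intro ballI conjI)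
    fix X Y assume X: "X \<in> ?V"
    from VS_cases[OF X] show "?P X [] = 0"
      by (auto simp: PF_def PF_enc Ppq_nil)
    from VS_cases[OF X] show "?P X [Inr Y] = 0"
      by (auto simp: PF_def PF_enc Ppq_var)
  qed
  have sol: "is_solution ?V ?P ?Sol"
    unfolding is_solution_def
  proof (intro ballI allI)
    fix X w assume X: "X \<in> ?V"
    have e: "(\<Sum>m\<in>supp (?P X). ?P X m * eval_mon ?Sol m w) = (\<Sum>m\<in>Mset A. ?P X m * eval_mon ?Sol m w)"
      by (rule sum_supp_M[OF fM PF_supp[OF X]])
    from VS_cases[OF X] show "?Sol X w = (\<Sum>m\<in>supp (?P X). ?P X m * eval_mon ?Sol m w)"
    proof
      assume X0: "X = 0"
      have "?Sol X w = (\<Sum>p\<in>states A. \<Sum>q\<in>states A. init A p * final A q * Wne A p q w)"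
        using PROJ[OF fin SA] by (simp add: SolF_def X0)
      also have "\<dots> = (\<Sum>p\<in>states A. \<Sum>q\<in>states A. init A p * final A q *
          (\<Sum>m\<in>Mset A. Ppq A p q m * eval_mon ?Sol m w))"
        by (intro sum.cong refl) (simp add: key[OF fin, where S=S])
      also have "\<dots> = (\<Sum>m\<in>Mset A. ?P X m * eval_mon ?Sol m w)"
        unfolding PF_def X0 sum_distrib_left sum_distrib_right
        by (simp add: sum.swap[of _ "Mset A"] sum_distrib_right mult.assoc)
      finally show ?thesis using e by simp
    next
      assume "\<exists>p q. p \<in> states A \<and> q \<in> states A \<and> X = enc p q"
      then obtain p q where pq: "p \<in> states A" "q \<in> states A" "X = enc p q" by blast
      show ?thesis unfolding e using key[OF fin pq(1,2), of w S] by (simp add: pq(3) SolF_enc PF_enc)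
    qed
  qed
  have qr: "\<forall>X\<in>?V. quasiregular (?Sol X)"
    by (auto simp: quasiregular_def SolF_def proj_def Wne_def split: prod.split)
  have s0: "?Sol 0 = proj S" by (simp add: SolF_def fun_eq_iff)
  show ?thesis
    unfolding algebraic_def
    using finite_VS[OF fin] polys proper sol qr s0
    by (intro exI[of _ ?V] exI[of _ ?P] exI[of _ 0] exI[of _ ?Sol]) (auto simp: VS_def)
qed

end
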